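(* Assume $M$ is projective in $\sigma[M]$ and let $X\in\sigma[M]$ with $X=\bigoplus_{\lambda\in\Lambda}X_\lambda$ an internal direct sum of submodules $X_\lambda$. Then $\mathrm{rad}_M(X)=\bigoplus_{\lambda\in\Lambda}\mathrm{rad}_M(X_\lambda)$.
   Context: $R$ is a ring with identity, modules are unital left $R$-modules, $M$ is a fixed left $R$-module; $\sigma[M]$ is the full subcategory of $R$-modules isomorphic to submodules of $M$-generated modules. For $N\le M$ and a module $X$, $N\cdot X$ is the intersection of the kernels of all homomorphisms $X\to W$ where $W$ ranges over modules with $f(N)=0$ for all $f\in\mathrm{Hom}_R(M,W)$ (for $Z\le X$, $N\cdot Z$ is formed regarding $Z$ as a module). A proper submodule $P$ of a module $X$ is $M$-prime if for all $N\le M$, $Z\le X$, $N\cdot Z\subseteq P$ implies $N\cdot X\subseteq P$ or $Z\subseteq P$. $\mathrm{rad}_M(X)$ is the intersection of all $M$-prime submodules of $X$ if $X$ has at least one, and $\mathrm{rad}_M(X)=X$ otherwise. *)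

theory Defs
  imports "HOL-Algebra.Module"
begin

text \<open>Left modules over a (not necessarily commutative) ring with identity R.
  A module is a HOL-Algebra module record; only carrier, add, zero, smult matter.\<close>

definition lmodule :: "('r, 'c) ring_scheme \<Rightarrow> ('r, 'x) module \<Rightarrow> bool" where
  "lmodule R X \<longleftrightarrow> ring R \<and> abelian_group X \<and>
     (\<forall>a\<in>carrier R. \<forall>x\<in>carrier X. smult X a x \<in> carrier X) \<and>
     (\<forall>a\<in>carrier R. \<forall>b\<in>carrier R. \<forall>x\<in>carrier X.
        smult X (a \<oplus>\<^bsub>R\<^esub> b) x = smult X a x \<oplus>\<^bsub>X\<^esub> smult X b x) \<and>
     (\<forall>a\<in>carrier R. \<forall>x\<in>carrier X. \<forall>y\<in>carrier X.
        smult X a (x \<oplus>\<^bsub>X\<^esub> y) = smult X a x \<oplus>\<^bsub>X\<^esub> smult X a y) \<and>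
     (\<forall>a\<in>carrier R. \<forall>b\<in>carrier R. \<forall>x\<in>carrier X.
        smult X (a \<otimes>\<^bsub>R\<^esub> b) x = smult X a (smult X b x)) \<and>
     (\<forall>x\<in>carrier X. smult X \<one>\<^bsub>R\<^esub> x = x)"

definition submod :: "('r, 'c) ring_scheme \<Rightarrow> ('r, 'x) module \<Rightarrow> 'x set \<Rightarrow> bool" where
  "submod R X N \<longleftrightarrow> N \<subseteq> carrier X \<and> \<zero>\<^bsub>X\<^esub> \<in> N \<and>
     (\<forall>x\<in>N. \<forall>y\<in>N. x \<oplus>\<^bsub>X\<^esub> y \<in> N) \<and>
     (\<forall>x\<in>N. \<ominus>\<^bsub>X\<^esub> x \<in> N) \<and>
     (\<forall>a\<in>carrier R. \<forall>x\<in>N. smult X a x \<in> N)"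

definition restr :: "('r, 'x) module \<Rightarrow> 'x set \<Rightarrow> ('r, 'x) module" where
  "restr X N = X\<lparr>carrier := N\<rparr>"

definition hom_mod :: "('r, 'c) ring_scheme \<Rightarrow> ('r, 'x) module \<Rightarrow> ('r, 'y) module \<Rightarrow> ('x \<Rightarrow> 'y) \<Rightarrow> bool" where
  "hom_mod R X Y f \<longleftrightarrow> f \<in> carrier X \<rightarrow> carrier Y \<and>
     (\<forall>x\<in>carrier X. \<forall>y\<in>carrier X. f (x \<oplus>\<^bsub>X\<^esub> y) = f x \<oplus>\<^bsub>Y\<^esub> f y) \<and>
     (\<forall>a\<in>carrier R. \<forall>x\<in>carrier X. f (smult X a x) = smult Y a (f x))"

definition kernel_mod :: "('r, 'x) module \<Rightarrow> ('r, 'y) module \<Rightarrow> ('x \<Rightarrow> 'y) \<Rightarrow> 'x set" where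
  "kernel_mod X Y f = {x \<in> carrier X. f x = \<zero>\<^bsub>Y\<^esub>}"

definition span_mod :: "('r, 'c) ring_scheme \<Rightarrow> ('r, 'y) module \<Rightarrow> 'y set \<Rightarrow> 'y set" where
  "span_mod R Y S = \<Inter> {N. submod R Y N \<and> S \<subseteq> N}"

text \<open>Y is M-generated: Y is the sum of the images of all homomorphisms M \<rightarrow> Y
  (equivalently, an epimorphic image of a direct sum of copies of M).\<close>
definition Mgen :: "('r, 'c) ring_scheme \<Rightarrow> ('r, 'm) module \<Rightarrow> ('r, 'y) module \<Rightarrow> bool" where
  "Mgen R M Y \<longleftrightarrow> carrier Y = span_mod R Y (\<Union> {f ` carrier M | f. hom_mod R M Y f})"

text \<open>X \<in> \<sigma>[M]: X is isomorphic to a submodule of an M-generated module. The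
  M-generated module is taken from the universe type 'u.\<close>
definition in_sigma :: "'u itself \<Rightarrow> ('r, 'c) ring_scheme \<Rightarrow> ('r, 'm) module \<Rightarrow> ('r, 'x) module \<Rightarrow> bool" where
  "in_sigma U R M X \<longleftrightarrow> (\<exists>(Y :: ('r, 'u) module) N g.
     lmodule R Y \<and> Mgen R M Y \<and> submod R Y N \<and>
     hom_mod R X (restr Y N) g \<and> bij_betw g (carrier X) N)"

definition proj_sigma :: "'u itself \<Rightarrow> ('r, 'c) ring_scheme \<Rightarrow> ('r, 'm) module \<Rightarrow> bool" where
  "proj_sigma U R M \<longleftrightarrow> (\<forall>(A :: ('r, 'u) module) (B :: ('r, 'u) module) g f.
     lmodule R A \<and> lmodule R B \<and> in_sigma U R M A \<and> in_sigma U R M B \<and>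
     hom_mod R A B g \<and> g ` carrier A = carrier B \<and> hom_mod R M B f \<longrightarrow>
     (\<exists>h. hom_mod R M A h \<and> (\<forall>m\<in>carrier M. g (h m) = f m)))"

text \<open>W ranges over modules with carrier type 'x set,
  which contains (copies of) all quotients of X.\<close>
definition prod_dot :: "('r, 'c) ring_scheme \<Rightarrow> ('r, 'm) module \<Rightarrow> 'm set \<Rightarrow> ('r, 'x) module \<Rightarrow> 'x set" where
  "prod_dot R M N X = carrier X \<inter> \<Inter> {kernel_mod X W f | (W :: ('r, 'x set) module) f.
     lmodule R W \<and> (\<forall>g. hom_mod R M W g \<longrightarrow> (\<forall>n\<in>N. g n = \<zero>\<^bsub>W\<^esub>)) \<and> hom_mod R X W f}"

definition M_prime :: "('r, 'c) ring_scheme \<Rightarrow> ('r, 'm) module \<Rightarrow> ('r, 'x) module \<Rightarrow> 'x set \<Rightarrow> bool" where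
  "M_prime R M X P \<longleftrightarrow> submod R X P \<and> P \<noteq> carrier X \<and>
     (\<forall>N Z. submod R M N \<longrightarrow> submod R X Z \<longrightarrow>
        prod_dot R M N (restr X Z) \<subseteq> P \<longrightarrow> prod_dot R M N X \<subseteq> P \<or> Z \<subseteq> P)"

definition radM :: "('r, 'c) ring_scheme \<Rightarrow> ('r, 'm) module \<Rightarrow> ('r, 'x) module \<Rightarrow> 'x set" where
  "radM R M X = (if \<exists>P. M_prime R M X P then \<Inter> {P. M_prime R M X P} else carrier X)"

definition sum_fam :: "('r, 'x) module \<Rightarrow> 'l set \<Rightarrow> ('l \<Rightarrow> 'x set) \<Rightarrow> 'x set" where
  "sum_fam X L S = {finsum X s F | s F. finite F \<and> F \<subseteq> L \<and> (\<forall>l\<in>F. s l \<in> S l)}"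

definition internal_dsum :: "('r, 'c) ring_scheme \<Rightarrow> ('r, 'x) module \<Rightarrow> 'l set \<Rightarrow> ('l \<Rightarrow> 'x set) \<Rightarrow> bool" where
  "internal_dsum R X L S \<longleftrightarrow> (\<forall>l\<in>L. submod R X (S l)) \<and> carrier X = sum_fam X L S \<and>
     (\<forall>l\<in>L. S l \<inter> sum_fam X (L - {l}) S \<subseteq> {\<zero>\<^bsub>X\<^esub>})"

end

theory Submission
  imports Defs
begin

lemma lmod_ag: "lmodule R X \<Longrightarrow> abelian_group X" by (simp add: lmodule_def)
lemma lmod_ring: "lmodule R X \<Longrightarrow> ring R" by (simp add: lmodule_def)
lemma lmod_closed: "lmodule R X \<Longrightarrow> a \<in> carrier R \<Longrightarrow> x \<in> carrier X \<Longrightarrow> smult X a x \<in> carrier X"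
  by (simp add: lmodule_def)
lemma lmod_distr: "lmodule R X \<Longrightarrow> a \<in> carrier R \<Longrightarrow> x \<in> carrier X \<Longrightarrow> y \<in> carrier X \<Longrightarrow>
   smult X a (x \<oplus>\<^bsub>X\<^esub> y) = smult X a x \<oplus>\<^bsub>X\<^esub> smult X a y"
  by (simp add: lmodule_def)

lemma lmod_ldistr: "lmodule R X \<Longrightarrow> a \<in> carrier R \<Longrightarrow> b \<in> carrier R \<Longrightarrow> x \<in> carrier X \<Longrightarrow>
   smult X (a \<oplus>\<^bsub>R\<^esub> b) x = smult X a x \<oplus>\<^bsub>X\<^esub> smult X b x"
  by (simp add: lmodule_def)
lemma lmod_assoc: "lmodule R X \<Longrightarrow> a \<in> carrier R \<Longrightarrow> b \<in> carrier R \<Longrightarrow> x \<in> carrier X \<Longrightarrow>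
   smult X (a \<otimes>\<^bsub>R\<^esub> b) x = smult X a (smult X b x)"
  by (simp add: lmodule_def)
lemma lmod_one: "lmodule R X \<Longrightarrow> x \<in> carrier X \<Longrightarrow> smult X \<one>\<^bsub>R\<^esub> x = x"
  by (simp add: lmodule_def)

lemma lmod_smult_zero:
  assumes "lmodule R X" "a \<in> carrier R"
  shows "smult X a \<zero>\<^bsub>X\<^esub> = \<zero>\<^bsub>X\<^esub>"
proof -
  interpret abelian_group X using assms lmod_ag by blast
  define z where "z = smult X a \<zero>\<^bsub>X\<^esub>"
  have c: "z \<in> carrier X" unfolding z_def by (rule lmod_closed[OF assms]) simp
  have "z = smult X a (\<zero>\<^bsub>X\<^esub> \<oplus>\<^bsub>X\<^esub> \<zero>\<^bsub>X\<^esub>)" by (simp add: z_def)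
  also have "\<dots> = z \<oplus>\<^bsub>X\<^esub> z" unfolding z_def by (rule lmod_distr[OF assms]) auto
  finally have f: "z = z \<oplus>\<^bsub>X\<^esub> z" .
  have "z = \<zero>\<^bsub>X\<^esub>" by (rule iffD1[OF add.l_cancel_one[OF c c] f[symmetric]])
  then show ?thesis by (simp add: z_def)
qed

lemma lmod_smult_neg:
  assumes "lmodule R X" "a \<in> carrier R" "x \<in> carrier X"
  shows "smult X a (\<ominus>\<^bsub>X\<^esub> x) = \<ominus>\<^bsub>X\<^esub> smult X a x"
proof -
  interpret abelian_group X using assms lmod_ag by blast
  have c: "smult X a x \<in> carrier X" "smult X a (\<ominus>\<^bsub>X\<^esub> x) \<in> carrier X"
    using lmod_closed[OF assms(1) assms(2)] assms(3) a_inv_closed by auto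
  have "smult X a (\<ominus>\<^bsub>X\<^esub> x) \<oplus>\<^bsub>X\<^esub> smult X a x = smult X a (\<ominus>\<^bsub>X\<^esub> x \<oplus>\<^bsub>X\<^esub> x)"
    by (rule lmod_distr[OF assms(1,2), symmetric]) (use assms(3) in auto)
  also have "\<dots> = smult X a \<zero>\<^bsub>X\<^esub>" using assms(3) by (simp add: l_neg)
  also have "\<dots> = \<zero>\<^bsub>X\<^esub>" by (rule lmod_smult_zero[OF assms(1,2)])
  finally have e: "smult X a (\<ominus>\<^bsub>X\<^esub> x) \<oplus>\<^bsub>X\<^esub> smult X a x = \<zero>\<^bsub>X\<^esub>" .
  show ?thesis by (rule minus_equality[OF e c(1) c(2), symmetric])
qed

lemma hom_closed: "hom_mod R X Y f \<Longrightarrow> x \<in> carrier X \<Longrightarrow> f x \<in> carrier Y"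
  by (auto simp: hom_mod_def)
lemma hom_add: "hom_mod R X Y f \<Longrightarrow> x \<in> carrier X \<Longrightarrow> y \<in> carrier X \<Longrightarrow> f (x \<oplus>\<^bsub>X\<^esub> y) = f x \<oplus>\<^bsub>Y\<^esub> f y"
  by (auto simp: hom_mod_def)
lemma hom_smult: "hom_mod R X Y f \<Longrightarrow> a \<in> carrier R \<Longrightarrow> x \<in> carrier X \<Longrightarrow> f (smult X a x) = smult Y a (f x)"
  by (auto simp: hom_mod_def)

lemma hom_zero:
  assumes "abelian_group X" "abelian_group Y" "hom_mod R X Y f"
  shows "f \<zero>\<^bsub>X\<^esub> = \<zero>\<^bsub>Y\<^esub>"
proof -
  interpret X: abelian_group X by fact
  interpret Y: abelian_group Y by fact
  define z where "z = f \<zero>\<^bsub>X\<^esub>"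
  have c: "z \<in> carrier Y" using hom_closed[OF assms(3)] z_def by simp
  have "z = f (\<zero>\<^bsub>X\<^esub> \<oplus>\<^bsub>X\<^esub> \<zero>\<^bsub>X\<^esub>)" by (simp add: z_def)
  also have "\<dots> = z \<oplus>\<^bsub>Y\<^esub> z" unfolding z_def by (rule hom_add[OF assms(3)]) auto
  finally have f: "z = z \<oplus>\<^bsub>Y\<^esub> z" .
  have "z = \<zero>\<^bsub>Y\<^esub>" by (rule iffD1[OF Y.add.l_cancel_one[OF c c] f[symmetric]])
  then show ?thesis by (simp add: z_def)
qed

lemma hom_neg:
  assumes "abelian_group X" "abelian_group Y" "hom_mod R X Y f" "x \<in> carrier X"
  shows "f (\<ominus>\<^bsub>X\<^esub> x) = \<ominus>\<^bsub>Y\<^esub> f x"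
proof -
  interpret X: abelian_group X by fact
  interpret Y: abelian_group Y by fact
  have c: "f x \<in> carrier Y" "f (\<ominus>\<^bsub>X\<^esub> x) \<in> carrier Y"
    using hom_closed[OF assms(3)] assms(4) by auto
  have "f (\<ominus>\<^bsub>X\<^esub> x) \<oplus>\<^bsub>Y\<^esub> f x = f (\<ominus>\<^bsub>X\<^esub> x \<oplus>\<^bsub>X\<^esub> x)"
    by (rule hom_add[OF assms(3), symmetric]) (use assms(4) in auto)
  also have "\<dots> = f \<zero>\<^bsub>X\<^esub>" using assms(4) by (simp add: X.l_neg)
  also have "\<dots> = \<zero>\<^bsub>Y\<^esub>" by (rule hom_zero[OF assms(1-3)])
  finally have e: "f (\<ominus>\<^bsub>X\<^esub> x) \<oplus>\<^bsub>Y\<^esub> f x = \<zero>\<^bsub>Y\<^esub>" .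
  show ?thesis by (rule Y.minus_equality[OF e c(1) c(2), symmetric])
qed

lemma hom_minus:
  assumes "abelian_group X" "abelian_group Y" "hom_mod R X Y f" "x \<in> carrier X" "y \<in> carrier X"
  shows "f (x \<ominus>\<^bsub>X\<^esub> y) = f x \<ominus>\<^bsub>Y\<^esub> f y"
proof -
  interpret X: abelian_group X by fact
  have "f (x \<ominus>\<^bsub>X\<^esub> y) = f (x \<oplus>\<^bsub>X\<^esub> \<ominus>\<^bsub>X\<^esub> y)" by (simp add: a_minus_def)
  also have "\<dots> = f x \<oplus>\<^bsub>Y\<^esub> f (\<ominus>\<^bsub>X\<^esub> y)"
    by (rule hom_add[OF assms(3)]) (use assms in auto)
  also have "\<dots> = f x \<ominus>\<^bsub>Y\<^esub> f y" by (simp add: hom_neg[OF assms(1-3,5)] a_minus_def)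
  finally show ?thesis .
qed

lemma hom_comp:
  assumes "hom_mod R X Y f" "hom_mod R Y Z g"
  shows "hom_mod R X Z (\<lambda>x. g (f x))"
  using assms unfolding hom_mod_def by (auto simp: Pi_def)

lemma hom_inv:
  assumes "lmodule R X" "hom_mod R X Y f" "bij_betw f (carrier X) (carrier Y)"
  shows "hom_mod R Y X (inv_into (carrier X) f)"
proof -
  interpret X: abelian_group X using assms(1) lmod_ag by blast
  let ?g = "inv_into (carrier X) f"
  have surj: "f ` carrier X = carrier Y" using assms(3) by (simp add: bij_betw_def)
  have g: "?g y \<in> carrier X \<and> f (?g y) = y" if "y \<in> carrier Y" for y
  proof -
    have "y \<in> f ` carrier X" using surj that by simp
    then show ?thesis by (simp add: inv_into_into f_inv_into_f)
  qed
  have gf: "\<And>x. x \<in> carrier X \<Longrightarrow> ?g (f x) = x"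
    using assms(3) by (simp add: bij_betw_imp_inj_on inv_into_f_f)
  show ?thesis unfolding hom_mod_def
  proof (intro conjI ballI)
    show "?g \<in> carrier Y \<rightarrow> carrier X" using g by auto
  next
    fix x y assume xy: "x \<in> carrier Y" "y \<in> carrier Y"
    have c: "?g x \<in> carrier X" "?g y \<in> carrier X" using g xy by auto
    have "f (?g x \<oplus>\<^bsub>X\<^esub> ?g y) = f (?g x) \<oplus>\<^bsub>Y\<^esub> f (?g y)"
      using hom_add[OF assms(2) c] .
    also have "\<dots> = x \<oplus>\<^bsub>Y\<^esub> y" using g xy by simp
    finally have e: "x \<oplus>\<^bsub>Y\<^esub> y = f (?g x \<oplus>\<^bsub>X\<^esub> ?g y)" by simp
    have "?g (x \<oplus>\<^bsub>Y\<^esub> y) = ?g (f (?g x \<oplus>\<^bsub>X\<^esub> ?g y))" using e by (rule arg_cong)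
    also have "\<dots> = ?g x \<oplus>\<^bsub>X\<^esub> ?g y" by (rule gf) (use c in simp)
    finally show "?g (x \<oplus>\<^bsub>Y\<^esub> y) = ?g x \<oplus>\<^bsub>X\<^esub> ?g y" .
  next
    fix a x assume ax: "a \<in> carrier R" "x \<in> carrier Y"
    have c: "?g x \<in> carrier X" using g ax by auto
    have "f (smult X a (?g x)) = smult Y a (f (?g x))" using hom_smult[OF assms(2) ax(1) c] .
    also have "\<dots> = smult Y a x" using g ax by simp
    finally have e: "smult Y a x = f (smult X a (?g x))" by simp
    have "?g (smult Y a x) = ?g (f (smult X a (?g x)))" using e by (rule arg_cong)
    also have "\<dots> = smult X a (?g x)" by (rule gf) (use c ax lmod_closed[OF assms(1)] in simp)
    finally show "?g (smult Y a x) = smult X a (?g x)" .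
  qed
qed

lemma restr_simps [simp]:
  "carrier (restr X N) = N" "zero (restr X N) = zero X" "add (restr X N) = add X"
  "smult (restr X N) = smult X" "restr (restr X A) B = restr X B"
  by (simp_all add: restr_def)

lemma submod_sub: "submod R X N \<Longrightarrow> N \<subseteq> carrier X" by (simp add: submod_def)
lemma submod_zero: "submod R X N \<Longrightarrow> \<zero>\<^bsub>X\<^esub> \<in> N" by (simp add: submod_def)
lemma submod_add: "submod R X N \<Longrightarrow> x \<in> N \<Longrightarrow> y \<in> N \<Longrightarrow> x \<oplus>\<^bsub>X\<^esub> y \<in> N" by (simp add: submod_def)
lemma submod_neg: "submod R X N \<Longrightarrow> x \<in> N \<Longrightarrow> \<ominus>\<^bsub>X\<^esub> x \<in> N" by (simp add: submod_def)
lemma submod_smult: "submod R X N \<Longrightarrow> a \<in> carrier R \<Longrightarrow> x \<in> N \<Longrightarrow> smult X a x \<in> N" by (simp add: submod_def)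
lemma submod_minus: "submod R X N \<Longrightarrow> x \<in> N \<Longrightarrow> y \<in> N \<Longrightarrow> x \<ominus>\<^bsub>X\<^esub> y \<in> N"
  by (simp add: submod_def a_minus_def)

lemma submod_ag:
  assumes "abelian_group X" "submod R X N"
  shows "abelian_group (restr X N)"
proof -
  interpret abelian_group X by fact
  have sub: "N \<subseteq> carrier X" using assms(2) submod_sub by blast
  show ?thesis
    apply (rule abelian_groupI)
    apply simp_all
    apply (erule (1) submod_add[OF assms(2)])
    apply (rule submod_zero[OF assms(2)])
    apply (meson a_assoc sub subsetD)
    apply (meson a_comm sub subsetD)
    apply (meson l_zero sub subsetD)
    apply (meson l_neg sub subsetD assms(2) submod_neg)
    done
qed

lemma restr_inv:
  assumes "abelian_group X" "submod R X N" "x \<in> N"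
  shows "\<ominus>\<^bsub>restr X N\<^esub> x = \<ominus>\<^bsub>X\<^esub> x"
proof -
  interpret X: abelian_group X by fact
  interpret Y: abelian_group "restr X N" using submod_ag[OF assms(1,2)] .
  have sub: "N \<subseteq> carrier X" using assms(2) submod_sub by blast
  show ?thesis
    by (rule Y.minus_equality) (use assms(3) sub submod_neg[OF assms(2)] X.l_neg in auto)
qed

lemma restr_minus:
  assumes "abelian_group X" "submod R X N" "x \<in> N" "y \<in> N"
  shows "x \<ominus>\<^bsub>restr X N\<^esub> y = x \<ominus>\<^bsub>X\<^esub> y"
  using restr_inv[OF assms(1,2,4)] by (simp add: a_minus_def)

lemma submod_lmodule:
  assumes "lmodule R X" "submod R X N"
  shows "lmodule R (restr X N)"
proof -
  have sub: "N \<subseteq> carrier X" using assms(2) submod_sub by blast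
  have ag: "abelian_group (restr X N)" using submod_ag[OF lmod_ag[OF assms(1)] assms(2)] .
  show ?thesis using assms(1) ag sub submod_smult[OF assms(2)] unfolding lmodule_def
    by (simp add: subset_iff)
qed

lemma submod_restr_iff:
  assumes "abelian_group X" "submod R X N"
  shows "submod R (restr X N) P \<longleftrightarrow> submod R X P \<and> P \<subseteq> N"
proof
  assume P: "submod R (restr X N) P"
  have sub: "P \<subseteq> N" using submod_sub[OF P] by simp
  have "\<ominus>\<^bsub>X\<^esub> x \<in> P" if "x \<in> P" for x
    using submod_neg[OF P that] restr_inv[OF assms, of x] sub that by auto
  then show "submod R X P \<and> P \<subseteq> N"
    using P sub submod_sub[OF assms(2)] unfolding submod_def by auto
next
  assume P: "submod R X P \<and> P \<subseteq> N"
  have "\<ominus>\<^bsub>restr X N\<^esub> x \<in> P" if "x \<in> P" for x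
    using submod_neg[of R X P x] P restr_inv[OF assms, of x] that by auto
  then show "submod R (restr X N) P" using P unfolding submod_def by auto
qed

lemma submod_carrier:
  assumes "lmodule R X" shows "submod R X (carrier X)"
proof -
  interpret abelian_group X using lmod_ag[OF assms] .
  show ?thesis unfolding submod_def using lmod_closed[OF assms] by auto
qed

lemma submod_Inter:
  assumes "S \<noteq> {}" "\<And>N. N \<in> S \<Longrightarrow> submod R X N"
  shows "submod R X (\<Inter>S)"
  using assms unfolding submod_def by blast

lemma submod_finsum:
  assumes "abelian_group X" "submod R X N" "finite F" "\<And>l. l \<in> F \<Longrightarrow> s l \<in> N"
  shows "finsum X s F \<in> N"
  using assms(3,4)
proof (induction F rule: finite_induct)
  case empty
  interpret abelian_group X by fact
  show ?case using submod_zero[OF assms(2)] by simp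
next
  case (insert l F)
  interpret abelian_group X by fact
  have sub: "N \<subseteq> carrier X" using assms(2) submod_sub by blast
  have "finsum X s (insert l F) = s l \<oplus>\<^bsub>X\<^esub> finsum X s F"
    by (rule finsum_insert) (use insert sub in auto)
  then show ?case using insert submod_add[OF assms(2)] by auto
qed

lemma hom_restr_dom: "hom_mod R X Y f \<Longrightarrow> N \<subseteq> carrier X \<Longrightarrow> hom_mod R (restr X N) Y f"
  unfolding hom_mod_def by (auto simp: Pi_def subset_iff)
lemma hom_restr_cod: "hom_mod R X Y f \<Longrightarrow> f ` carrier X \<subseteq> N \<Longrightarrow> hom_mod R X (restr Y N) f"
  unfolding hom_mod_def by auto
lemma hom_from_restr_cod: "hom_mod R X (restr Y N) f \<Longrightarrow> N \<subseteq> carrier Y \<Longrightarrow> hom_mod R X Y f"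
  unfolding hom_mod_def by auto

lemma submod_image:
  assumes "abelian_group X" "abelian_group Y" "hom_mod R X Y f" "submod R X N"
  shows "submod R Y (f ` N)"
proof -
  have sub: "N \<subseteq> carrier X" using assms(4) submod_sub by blast
  show ?thesis unfolding submod_def
  proof (intro conjI ballI)
    show "f ` N \<subseteq> carrier Y" using sub hom_closed[OF assms(3)] by auto
    show "\<zero>\<^bsub>Y\<^esub> \<in> f ` N" using hom_zero[OF assms(1-3)] submod_zero[OF assms(4)] by force
  next
    fix x y assume "x \<in> f ` N" "y \<in> f ` N"
    then obtain a b where "a \<in> N" "b \<in> N" "x = f a" "y = f b" by auto
    then show "x \<oplus>\<^bsub>Y\<^esub> y \<in> f ` N"
      using hom_add[OF assms(3), of a b] sub submod_add[OF assms(4), of a b] by force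
  next
    fix x assume "x \<in> f ` N"
    then obtain a where "a \<in> N" "x = f a" by auto
    then show "\<ominus>\<^bsub>Y\<^esub> x \<in> f ` N"
      using hom_neg[OF assms(1-3), of a] sub submod_neg[OF assms(4), of a] by force
  next
    fix r x assume "r \<in> carrier R" "x \<in> f ` N"
    then obtain a where "a \<in> N" "x = f a" by auto
    then show "smult Y r x \<in> f ` N"
      using hom_smult[OF assms(3) \<open>r \<in> carrier R\<close>, of a] sub
        submod_smult[OF assms(4) \<open>r \<in> carrier R\<close>, of a] by force
  qed
qed

lemma submod_preimage:
  assumes "lmodule R X" "lmodule R Y" "hom_mod R X Y f" "submod R Y N"
  shows "submod R X {x \<in> carrier X. f x \<in> N}"
proof -
  interpret X: abelian_group X using assms(1) lmod_ag by blast
  have agY: "abelian_group Y" using assms(2) lmod_ag by blast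
  show ?thesis unfolding submod_def
    using hom_zero[OF X.abelian_group_axioms agY assms(3)] submod_zero[OF assms(4)]
      hom_add[OF assms(3)] submod_add[OF assms(4)]
      hom_neg[OF X.abelian_group_axioms agY assms(3)] submod_neg[OF assms(4)]
      hom_smult[OF assms(3)] submod_smult[OF assms(4)] lmod_closed[OF assms(1)]
    by auto
qed

section \<open>The product N.X\<close>

lemma PD_sub: "prod_dot R M N X \<subseteq> carrier X" by (simp add: prod_dot_def)

lemma PD_memI:
  fixes X :: "('r,'x) module"
  assumes "x \<in> carrier X"
    and "\<And>(W::('r,'x set) module) f. lmodule R W \<Longrightarrow> (\<forall>g. hom_mod R M W g \<longrightarrow> (\<forall>n\<in>N. g n = \<zero>\<^bsub>W\<^esub>))
       \<Longrightarrow> hom_mod R X W f \<Longrightarrow> f x = \<zero>\<^bsub>W\<^esub>"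
  shows "x \<in> prod_dot R M N X"
  using assms unfolding prod_dot_def kernel_mod_def by blast

lemma PD_memD:
  fixes X :: "('r,'x) module" and W :: "('r,'x set) module"
  assumes "x \<in> prod_dot R M N X" "lmodule R W" "\<forall>g. hom_mod R M W g \<longrightarrow> (\<forall>n\<in>N. g n = \<zero>\<^bsub>W\<^esub>)"
    "hom_mod R X W f"
  shows "f x = \<zero>\<^bsub>W\<^esub>"
proof -
  have "x \<in> kernel_mod X W f" using assms unfolding prod_dot_def by blast
  then show ?thesis by (simp add: kernel_mod_def)
qed

lemma PD_submod:
  fixes X :: "('r,'x) module"
  assumes "lmodule R X"
  shows "submod R X (prod_dot R M N X)"
proof -
  interpret X: abelian_group X using lmod_ag[OF assms] .
  show ?thesis unfolding submod_def
  proof (intro conjI ballI)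
    show "prod_dot R M N X \<subseteq> carrier X" by (rule PD_sub)
    show "\<zero>\<^bsub>X\<^esub> \<in> prod_dot R M N X"
    proof (rule PD_memI)
      fix W :: "('r,'x set) module" and f
      assume W: "lmodule R W" "\<forall>g. hom_mod R M W g \<longrightarrow> (\<forall>n\<in>N. g n = \<zero>\<^bsub>W\<^esub>)" "hom_mod R X W f"
      show "f \<zero>\<^bsub>X\<^esub> = \<zero>\<^bsub>W\<^esub>" by (rule hom_zero[OF X.abelian_group_axioms lmod_ag[OF W(1)] W(3)])
    qed simp
  next
    fix x y assume xy: "x \<in> prod_dot R M N X" "y \<in> prod_dot R M N X"
    have c: "x \<in> carrier X" "y \<in> carrier X" using xy PD_sub[of R M N X] by auto
    show "x \<oplus>\<^bsub>X\<^esub> y \<in> prod_dot R M N X"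
    proof (rule PD_memI)
      show "x \<oplus>\<^bsub>X\<^esub> y \<in> carrier X" using c by simp
      fix W :: "('r,'x set) module" and f
      assume W: "lmodule R W" "\<forall>g. hom_mod R M W g \<longrightarrow> (\<forall>n\<in>N. g n = \<zero>\<^bsub>W\<^esub>)" "hom_mod R X W f"
      interpret W: abelian_group W using lmod_ag[OF W(1)] .
      have "f (x \<oplus>\<^bsub>X\<^esub> y) = f x \<oplus>\<^bsub>W\<^esub> f y" using hom_add[OF W(3) c] .
      also have "\<dots> = \<zero>\<^bsub>W\<^esub>" using PD_memD[OF xy(1) W] PD_memD[OF xy(2) W] by simp
      finally show "f (x \<oplus>\<^bsub>X\<^esub> y) = \<zero>\<^bsub>W\<^esub>" .
    qed
  next
    fix x assume xy: "x \<in> prod_dot R M N X"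
    have c: "x \<in> carrier X" using xy PD_sub[of R M N X] by auto
    show "\<ominus>\<^bsub>X\<^esub> x \<in> prod_dot R M N X"
    proof (rule PD_memI)
      show "\<ominus>\<^bsub>X\<^esub> x \<in> carrier X" using c by simp
      fix W :: "('r,'x set) module" and f
      assume W: "lmodule R W" "\<forall>g. hom_mod R M W g \<longrightarrow> (\<forall>n\<in>N. g n = \<zero>\<^bsub>W\<^esub>)" "hom_mod R X W f"
      interpret W: abelian_group W using lmod_ag[OF W(1)] .
      have "f (\<ominus>\<^bsub>X\<^esub> x) = \<ominus>\<^bsub>W\<^esub> f x" using hom_neg[OF X.abelian_group_axioms W.abelian_group_axioms W(3) c] .
      also have "\<dots> = \<zero>\<^bsub>W\<^esub>" using PD_memD[OF xy(1) W] by simp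
      finally show "f (\<ominus>\<^bsub>X\<^esub> x) = \<zero>\<^bsub>W\<^esub>" .
    qed
  next
    fix a x assume a: "a \<in> carrier R" and xy: "x \<in> prod_dot R M N X"
    have c: "x \<in> carrier X" using xy PD_sub[of R M N X] by auto
    show "smult X a x \<in> prod_dot R M N X"
    proof (rule PD_memI)
      show "smult X a x \<in> carrier X" using c a lmod_closed[OF assms] by simp
      fix W :: "('r,'x set) module" and f
      assume W: "lmodule R W" "\<forall>g. hom_mod R M W g \<longrightarrow> (\<forall>n\<in>N. g n = \<zero>\<^bsub>W\<^esub>)" "hom_mod R X W f"
      have "f (smult X a x) = smult W a (f x)" using hom_smult[OF W(3) a c] .
      also have "\<dots> = \<zero>\<^bsub>W\<^esub>" using PD_memD[OF xy(1) W] lmod_smult_zero[OF W(1) a] by simp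
      finally show "f (smult X a x) = \<zero>\<^bsub>W\<^esub>" .
    qed
  qed
qed

lemma PD_mono:
  fixes X :: "('r,'x) module"
  assumes "Z \<subseteq> carrier X"
  shows "prod_dot R M N (restr X Z) \<subseteq> prod_dot R M N X"
proof
  fix x assume x: "x \<in> prod_dot R M N (restr X Z)"
  have xZ: "x \<in> Z" using x PD_sub[of R M N "restr X Z"] by auto
  show "x \<in> prod_dot R M N X"
  proof (rule PD_memI)
    show "x \<in> carrier X" using xZ assms by auto
    fix W :: "('r,'x set) module" and f
    assume W: "lmodule R W" "\<forall>g. hom_mod R M W g \<longrightarrow> (\<forall>n\<in>N. g n = \<zero>\<^bsub>W\<^esub>)" "hom_mod R X W f"
    show "f x = \<zero>\<^bsub>W\<^esub>" using PD_memD[OF x W(1,2) hom_restr_dom[OF W(3) assms]] .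
  qed
qed

lemma PD_image:
  fixes X Y :: "('r,'x) module"
  assumes "hom_mod R X Y f"
  shows "f ` prod_dot R M N X \<subseteq> prod_dot R M N Y"
proof
  fix y assume "y \<in> f ` prod_dot R M N X"
  then obtain x where x: "x \<in> prod_dot R M N X" "y = f x" by auto
  show "y \<in> prod_dot R M N Y"
  proof (rule PD_memI)
    show "y \<in> carrier Y" using x PD_sub[of R M N X] hom_closed[OF assms] by blast
    fix W :: "('r,'x set) module" and h
    assume W: "lmodule R W" "\<forall>g. hom_mod R M W g \<longrightarrow> (\<forall>n\<in>N. g n = \<zero>\<^bsub>W\<^esub>)" "hom_mod R Y W h"
    show "h y = \<zero>\<^bsub>W\<^esub>" using PD_memD[OF x(1) W(1,2) hom_comp[OF assms W(3)]] x(2) by simp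
  qed
qed

lemma PD_gen:
  fixes Y :: "('r,'x) module"
  assumes "hom_mod R M Y k" "n \<in> N" "N \<subseteq> carrier M"
  shows "k n \<in> prod_dot R M N Y"
proof (rule PD_memI)
  show "k n \<in> carrier Y" using hom_closed[OF assms(1)] assms(2,3) by blast
  fix W :: "('r,'x set) module" and h
  assume W: "lmodule R W" "\<forall>g. hom_mod R M W g \<longrightarrow> (\<forall>n\<in>N. g n = \<zero>\<^bsub>W\<^esub>)" "hom_mod R Y W h"
  have "hom_mod R M W (\<lambda>x. h (k x))" using hom_comp[OF assms(1) W(3)] .
  then show "h (k n) = \<zero>\<^bsub>W\<^esub>" using W(2) assms(2) by blast
qed

context abelian_group begin
lemma ag_h1: "x \<in> carrier G \<Longrightarrow> y \<in> carrier G \<Longrightarrow> z \<in> carrier G \<Longrightarrow> y \<ominus> z = (y \<ominus> x) \<oplus> (x \<ominus> z)"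
  by (simp add: a_minus_def a_assoc r_neg1)
lemma ag_h2: "x \<in> carrier G \<Longrightarrow> y \<in> carrier G \<Longrightarrow> \<ominus> (x \<ominus> y) = y \<ominus> x"
  by (simp add: a_minus_def minus_add minus_minus a_ac)
lemma ag_h3: "a \<in> carrier G \<Longrightarrow> b \<in> carrier G \<Longrightarrow> c \<in> carrier G \<Longrightarrow> d \<in> carrier G \<Longrightarrow>
   (a \<oplus> b) \<ominus> (c \<oplus> d) = (a \<ominus> c) \<oplus> (b \<ominus> d)"
  by (simp add: a_minus_def minus_add a_ac)
lemma ag_h4: "x \<in> carrier G \<Longrightarrow> x \<ominus> x = \<zero>"
  by (simp add: a_minus_def r_neg)
lemma ag_h5: "x \<in> carrier G \<Longrightarrow> x \<ominus> \<zero> = x"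
  by (simp add: a_minus_def)
lemma ag_h6: "x \<in> carrier G \<Longrightarrow> y \<in> carrier G \<Longrightarrow> x \<ominus> (x \<ominus> y) = y"
  by (simp add: a_minus_def minus_add minus_minus r_neg2)
lemma ag_h7: "x \<in> carrier G \<Longrightarrow> y \<in> carrier G \<Longrightarrow> x \<ominus> y = \<zero> \<Longrightarrow> x = y"
  by (metis a_minus_def add.inv_closed add.inv_equality minus_minus)
end

lemma lmod_smult_minus:
  assumes "lmodule R X" "a \<in> carrier R" "x \<in> carrier X" "y \<in> carrier X"
  shows "smult X a (x \<ominus>\<^bsub>X\<^esub> y) = smult X a x \<ominus>\<^bsub>X\<^esub> smult X a y"
proof -
  interpret abelian_group X using lmod_ag[OF assms(1)] .
  have "smult X a (x \<ominus>\<^bsub>X\<^esub> y) = smult X a (x \<oplus>\<^bsub>X\<^esub> \<ominus>\<^bsub>X\<^esub> y)" by (simp add: a_minus_def)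
  also have "\<dots> = smult X a x \<oplus>\<^bsub>X\<^esub> smult X a (\<ominus>\<^bsub>X\<^esub> y)"
    by (rule lmod_distr[OF assms(1,2)]) (use assms in auto)
  also have "\<dots> = smult X a x \<ominus>\<^bsub>X\<^esub> smult X a y"
    by (simp add: lmod_smult_neg[OF assms(1,2,4)] a_minus_def)
  finally show ?thesis .
qed

section \<open>Quotient modules via representatives\<close>

definition qrep :: "('r, 'a) module \<Rightarrow> 'a set \<Rightarrow> 'a \<Rightarrow> 'a" where
  "qrep X K x = (SOME y. y \<in> carrier X \<and> x \<ominus>\<^bsub>X\<^esub> y \<in> K)"

definition qmap :: "('r, 'a) module \<Rightarrow> 'a set \<Rightarrow> ('a \<Rightarrow> 'b) \<Rightarrow> 'a \<Rightarrow> 'b" where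
  "qmap X K i x = i (qrep X K x)"

definition Quot :: "('r, 'a) module \<Rightarrow> 'a set \<Rightarrow> ('a \<Rightarrow> 'b) \<Rightarrow> ('r, 'b) module" where
  "Quot X K i = \<lparr>carrier = qmap X K i ` carrier X, mult = (\<lambda>a b. a), one = qmap X K i \<zero>\<^bsub>X\<^esub>,
     zero = qmap X K i \<zero>\<^bsub>X\<^esub>, add = (\<lambda>a b. qmap X K i (inv_into UNIV i a \<oplus>\<^bsub>X\<^esub> inv_into UNIV i b)),
     smult = (\<lambda>r a. qmap X K i (smult X r (inv_into UNIV i a)))\<rparr>"

lemma qrep_props:
  assumes "abelian_group X" "submod R X K" "x \<in> carrier X"
  shows "qrep X K x \<in> carrier X \<and> x \<ominus>\<^bsub>X\<^esub> qrep X K x \<in> K"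
proof -
  interpret abelian_group X by fact
  have "x \<in> carrier X \<and> x \<ominus>\<^bsub>X\<^esub> x \<in> K" using assms(3) submod_zero[OF assms(2)] ag_h4 by simp
  then show ?thesis unfolding qrep_def by (rule someI)
qed

lemma qrep_eq:
  assumes "abelian_group X" "submod R X K" "x \<in> carrier X" "y \<in> carrier X" "x \<ominus>\<^bsub>X\<^esub> y \<in> K"
  shows "qrep X K x = qrep X K y"
proof -
  interpret abelian_group X by fact
  have sub: "K \<subseteq> carrier X" using submod_sub[OF assms(2)] .
  have yx: "y \<ominus>\<^bsub>X\<^esub> x \<in> K" using submod_neg[OF assms(2) assms(5)] ag_h2[OF assms(3,4)] by simp
  have e: "(z \<in> carrier X \<and> x \<ominus>\<^bsub>X\<^esub> z \<in> K) = (z \<in> carrier X \<and> y \<ominus>\<^bsub>X\<^esub> z \<in> K)" for z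
  proof (cases "z \<in> carrier X")
    case True
    have "y \<ominus>\<^bsub>X\<^esub> z = (y \<ominus>\<^bsub>X\<^esub> x) \<oplus>\<^bsub>X\<^esub> (x \<ominus>\<^bsub>X\<^esub> z)" using ag_h1[OF assms(3) assms(4) True] .
    moreover have "x \<ominus>\<^bsub>X\<^esub> z = (x \<ominus>\<^bsub>X\<^esub> y) \<oplus>\<^bsub>X\<^esub> (y \<ominus>\<^bsub>X\<^esub> z)" using ag_h1[OF assms(4) assms(3) True] .
    ultimately show ?thesis using submod_add[OF assms(2)] yx assms(5) True by metis
  qed simp
  have "(\<lambda>z. z \<in> carrier X \<and> x \<ominus>\<^bsub>X\<^esub> z \<in> K) = (\<lambda>z. z \<in> carrier X \<and> y \<ominus>\<^bsub>X\<^esub> z \<in> K)"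
    using e by (rule ext)
  then show ?thesis unfolding qrep_def by (rule arg_cong)
qed

lemma qrep_eq_iff:
  assumes "abelian_group X" "submod R X K" "x \<in> carrier X" "y \<in> carrier X"
  shows "qrep X K x = qrep X K y \<longleftrightarrow> x \<ominus>\<^bsub>X\<^esub> y \<in> K"
proof
  assume e: "qrep X K x = qrep X K y"
  interpret abelian_group X by fact
  define q where "q = qrep X K y"
  have q: "q \<in> carrier X" "y \<ominus>\<^bsub>X\<^esub> q \<in> K" "x \<ominus>\<^bsub>X\<^esub> q \<in> K"
    using qrep_props[OF assms(1,2,4)] qrep_props[OF assms(1,2,3)] e q_def by auto
  have "q \<ominus>\<^bsub>X\<^esub> y \<in> K" using submod_neg[OF assms(2) q(2)] ag_h2[OF assms(4) q(1)] by simp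
  moreover have "x \<ominus>\<^bsub>X\<^esub> y = (x \<ominus>\<^bsub>X\<^esub> q) \<oplus>\<^bsub>X\<^esub> (q \<ominus>\<^bsub>X\<^esub> y)" using ag_h1[OF q(1) assms(3,4)] .
  ultimately show "x \<ominus>\<^bsub>X\<^esub> y \<in> K" using submod_add[OF assms(2) q(3)] by simp
qed (rule qrep_eq[OF assms])

lemma qrep_idem:
  assumes "abelian_group X" "submod R X K" "x \<in> carrier X"
  shows "qrep X K (qrep X K x) = qrep X K x"
proof -
  have p: "qrep X K x \<in> carrier X" "x \<ominus>\<^bsub>X\<^esub> qrep X K x \<in> K" using qrep_props[OF assms] by auto
  show ?thesis using qrep_eq[OF assms p(1) p(2)] by simp
qed

context
  fixes R :: "('r, 'c) ring_scheme" and X :: "('r, 'a) module" and K :: "'a set" and i :: "'a \<Rightarrow> 'b"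
  assumes lmX: "lmodule R X" and subK: "submod R X K" and inj: "inj i"
begin

lemma ag_X: "abelian_group X" using lmod_ag[OF lmX] .

lemma qmap_eq_iff: "x \<in> carrier X \<Longrightarrow> y \<in> carrier X \<Longrightarrow> qmap X K i x = qmap X K i y \<longleftrightarrow> x \<ominus>\<^bsub>X\<^esub> y \<in> K"
  unfolding qmap_def using qrep_eq_iff[OF ag_X subK] inj by (simp add: inj_eq)

lemma inv_qmap: "inv_into UNIV i (qmap X K i x) = qrep X K x"
  unfolding qmap_def using inj by simp

lemma Quot_carrier: "carrier (Quot X K i) = qmap X K i ` carrier X" by (simp add: Quot_def)
lemma Quot_zero: "zero (Quot X K i) = qmap X K i \<zero>\<^bsub>X\<^esub>" by (simp add: Quot_def)

lemma Quot_add: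
  assumes "x \<in> carrier X" "y \<in> carrier X"
  shows "add (Quot X K i) (qmap X K i x) (qmap X K i y) = qmap X K i (x \<oplus>\<^bsub>X\<^esub> y)"
proof -
  interpret abelian_group X using ag_X .
  have px: "qrep X K x \<in> carrier X" "x \<ominus>\<^bsub>X\<^esub> qrep X K x \<in> K" using qrep_props[OF ag_X subK assms(1)] by auto
  have py: "qrep X K y \<in> carrier X" "y \<ominus>\<^bsub>X\<^esub> qrep X K y \<in> K" using qrep_props[OF ag_X subK assms(2)] by auto
  have "(x \<oplus>\<^bsub>X\<^esub> y) \<ominus>\<^bsub>X\<^esub> (qrep X K x \<oplus>\<^bsub>X\<^esub> qrep X K y) = (x \<ominus>\<^bsub>X\<^esub> qrep X K x) \<oplus>\<^bsub>X\<^esub> (y \<ominus>\<^bsub>X\<^esub> qrep X K y)"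
    using ag_h3[OF assms(1) assms(2) px(1) py(1)] .
  then have "(x \<oplus>\<^bsub>X\<^esub> y) \<ominus>\<^bsub>X\<^esub> (qrep X K x \<oplus>\<^bsub>X\<^esub> qrep X K y) \<in> K"
    using submod_add[OF subK px(2) py(2)] by simp
  then have "qmap X K i (x \<oplus>\<^bsub>X\<^esub> y) = qmap X K i (qrep X K x \<oplus>\<^bsub>X\<^esub> qrep X K y)"
    using qmap_eq_iff assms px py by simp
  then show ?thesis by (simp add: Quot_def inv_qmap)
qed

lemma Quot_smult:
  assumes "a \<in> carrier R" "x \<in> carrier X"
  shows "smult (Quot X K i) a (qmap X K i x) = qmap X K i (smult X a x)"
proof -
  interpret abelian_group X using ag_X .
  have px: "qrep X K x \<in> carrier X" "x \<ominus>\<^bsub>X\<^esub> qrep X K x \<in> K" using qrep_props[OF ag_X subK assms(2)] by auto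
  have "smult X a x \<ominus>\<^bsub>X\<^esub> smult X a (qrep X K x) = smult X a (x \<ominus>\<^bsub>X\<^esub> qrep X K x)"
    using lmod_smult_minus[OF lmX assms(1) assms(2) px(1)] by simp
  then have "smult X a x \<ominus>\<^bsub>X\<^esub> smult X a (qrep X K x) \<in> K"
    using submod_smult[OF subK assms(1) px(2)] by simp
  then have "qmap X K i (smult X a x) = qmap X K i (smult X a (qrep X K x))"
    using qmap_eq_iff lmod_closed[OF lmX assms(1)] assms px by simp
  then show ?thesis by (simp add: Quot_def inv_qmap)
qed

lemma qmap_kernel: "x \<in> carrier X \<Longrightarrow> qmap X K i x = zero (Quot X K i) \<longleftrightarrow> x \<in> K"
proof -
  assume x: "x \<in> carrier X"
  interpret abelian_group X using ag_X .
  show ?thesis using qmap_eq_iff[OF x zero_closed] ag_h5[OF x] by (simp add: Quot_zero)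
qed

end

lemma image_lmodule:
  fixes Q :: "('r, 'b) module"
  assumes lmX: "lmodule R X" and surj: "p ` carrier X = carrier Q"
    and padd: "\<And>x y. x \<in> carrier X \<Longrightarrow> y \<in> carrier X \<Longrightarrow> p (x \<oplus>\<^bsub>X\<^esub> y) = p x \<oplus>\<^bsub>Q\<^esub> p y"
    and pzero: "p \<zero>\<^bsub>X\<^esub> = \<zero>\<^bsub>Q\<^esub>"
    and psmult: "\<And>a x. a \<in> carrier R \<Longrightarrow> x \<in> carrier X \<Longrightarrow> p (smult X a x) = smult Q a (p x)"
  shows "lmodule R Q" "hom_mod R X Q p"
proof -
  interpret X: abelian_group X using lmod_ag[OF lmX] .
  have pc: "\<And>x. x \<in> carrier X \<Longrightarrow> p x \<in> carrier Q" using surj by blast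
  have ex: "\<And>u. u \<in> carrier Q \<Longrightarrow> \<exists>x\<in>carrier X. u = p x" using surj by blast
  show "hom_mod R X Q p" unfolding hom_mod_def using pc padd psmult by auto
  have ag: "abelian_group Q"
  proof (rule abelian_groupI)
    fix u v assume "u \<in> carrier Q" "v \<in> carrier Q"
    then obtain x y where xy: "x \<in> carrier X" "y \<in> carrier X" "u = p x" "v = p y" using ex[of u] ex[of v] by blast
    show "u \<oplus>\<^bsub>Q\<^esub> v \<in> carrier Q" using xy padd[OF xy(1,2)] pc[of "x \<oplus>\<^bsub>X\<^esub> y"] by simp
    show "u \<oplus>\<^bsub>Q\<^esub> v = v \<oplus>\<^bsub>Q\<^esub> u" using xy padd[OF xy(1,2)] padd[OF xy(2,1)] X.a_comm[OF xy(1,2)] by simp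
  next
    show "\<zero>\<^bsub>Q\<^esub> \<in> carrier Q" using pzero pc[OF X.zero_closed] by simp
  next
    fix u v w assume "u \<in> carrier Q" "v \<in> carrier Q" "w \<in> carrier Q"
    then obtain x y z where xy: "x \<in> carrier X" "y \<in> carrier X" "z \<in> carrier X" "u = p x" "v = p y" "w = p z"
      using ex[of u] ex[of v] ex[of w] by blast
    have "u \<oplus>\<^bsub>Q\<^esub> v \<oplus>\<^bsub>Q\<^esub> w = p ((x \<oplus>\<^bsub>X\<^esub> y) \<oplus>\<^bsub>X\<^esub> z)"
      using xy padd[OF xy(1,2)] padd[of "x \<oplus>\<^bsub>X\<^esub> y" z] by simp
    also have "\<dots> = p (x \<oplus>\<^bsub>X\<^esub> (y \<oplus>\<^bsub>X\<^esub> z))" using X.a_assoc xy by simp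
    also have "\<dots> = u \<oplus>\<^bsub>Q\<^esub> (v \<oplus>\<^bsub>Q\<^esub> w)"
      using xy padd[OF xy(2,3)] padd[of x "y \<oplus>\<^bsub>X\<^esub> z"] by simp
    finally show "u \<oplus>\<^bsub>Q\<^esub> v \<oplus>\<^bsub>Q\<^esub> w = u \<oplus>\<^bsub>Q\<^esub> (v \<oplus>\<^bsub>Q\<^esub> w)" .
  next
    fix u assume "u \<in> carrier Q"
    then obtain x where xy: "x \<in> carrier X" "u = p x" using ex by blast
    show "\<zero>\<^bsub>Q\<^esub> \<oplus>\<^bsub>Q\<^esub> u = u" using xy padd[OF X.zero_closed xy(1)] pzero by simp
    have "p (\<ominus>\<^bsub>X\<^esub> x) \<oplus>\<^bsub>Q\<^esub> u = \<zero>\<^bsub>Q\<^esub>"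
      using xy padd[OF X.a_inv_closed[OF xy(1)] xy(1)] pzero X.l_neg[OF xy(1)] by simp
    then show "\<exists>v\<in>carrier Q. v \<oplus>\<^bsub>Q\<^esub> u = \<zero>\<^bsub>Q\<^esub>" using pc[OF X.a_inv_closed[OF xy(1)]] by blast
  qed
  have one: "\<one>\<^bsub>R\<^esub> \<in> carrier R" using ring.ring_simprules(6)[OF lmod_ring[OF lmX]] .
  have radd: "\<And>a b. a \<in> carrier R \<Longrightarrow> b \<in> carrier R \<Longrightarrow> a \<oplus>\<^bsub>R\<^esub> b \<in> carrier R"
    using ring.ring_simprules(1)[OF lmod_ring[OF lmX]] .
  have rmul: "\<And>a b. a \<in> carrier R \<Longrightarrow> b \<in> carrier R \<Longrightarrow> a \<otimes>\<^bsub>R\<^esub> b \<in> carrier R"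
    using ring.ring_simprules(5)[OF lmod_ring[OF lmX]] .
  show "lmodule R Q" unfolding lmodule_def
    apply (intro conjI ballI)
    subgoal using lmod_ring[OF lmX] .
    subgoal using ag .
    subgoal for a u
    proof -
      assume a: "a \<in> carrier R" and u: "u \<in> carrier Q"
      obtain x where xy: "x \<in> carrier X" "u = p x" using ex[OF u] by blast
      show "smult Q a u \<in> carrier Q"
        using psmult[OF a xy(1)] pc[OF lmod_closed[OF lmX a xy(1)]] xy(2) by simp
    qed
    subgoal for a b u
    proof -
      assume ab: "a \<in> carrier R" "b \<in> carrier R" and u: "u \<in> carrier Q"
      obtain x where xy: "x \<in> carrier X" "u = p x" using ex[OF u] by blast
      have sx: "smult X a x \<in> carrier X" "smult X b x \<in> carrier X"
        using lmod_closed[OF lmX ab(1) xy(1)] lmod_closed[OF lmX ab(2) xy(1)] by auto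
      have "smult Q (a \<oplus>\<^bsub>R\<^esub> b) u = p (smult X (a \<oplus>\<^bsub>R\<^esub> b) x)" using psmult[OF radd[OF ab] xy(1)] xy(2) by simp
      also have "\<dots> = p (smult X a x \<oplus>\<^bsub>X\<^esub> smult X b x)" using lmod_ldistr[OF lmX ab xy(1)] by simp
      also have "\<dots> = p (smult X a x) \<oplus>\<^bsub>Q\<^esub> p (smult X b x)" by (rule padd[OF sx])
      also have "\<dots> = smult Q a u \<oplus>\<^bsub>Q\<^esub> smult Q b u"
        using psmult[OF ab(1) xy(1)] psmult[OF ab(2) xy(1)] xy(2) by simp
      finally show ?thesis .
    qed
    subgoal for a u v
    proof -
      assume a: "a \<in> carrier R" and u: "u \<in> carrier Q" and v: "v \<in> carrier Q"
      obtain x where x: "x \<in> carrier X" "u = p x" using ex[OF u] by blast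
      obtain y where y: "y \<in> carrier X" "v = p y" using ex[OF v] by blast
      have sx: "smult X a x \<in> carrier X" "smult X a y \<in> carrier X"
        using lmod_closed[OF lmX a x(1)] lmod_closed[OF lmX a y(1)] by auto
      have "smult Q a (u \<oplus>\<^bsub>Q\<^esub> v) = smult Q a (p (x \<oplus>\<^bsub>X\<^esub> y))" using padd[OF x(1) y(1)] x(2) y(2) by simp
      also have "\<dots> = p (smult X a (x \<oplus>\<^bsub>X\<^esub> y))" by (rule psmult[OF a X.a_closed[OF x(1) y(1)], symmetric])
      also have "\<dots> = p (smult X a x \<oplus>\<^bsub>X\<^esub> smult X a y)" using lmod_distr[OF lmX a x(1) y(1)] by simp
      also have "\<dots> = p (smult X a x) \<oplus>\<^bsub>Q\<^esub> p (smult X a y)" by (rule padd[OF sx])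
      also have "\<dots> = smult Q a u \<oplus>\<^bsub>Q\<^esub> smult Q a v" using psmult[OF a x(1)] psmult[OF a y(1)] x(2) y(2) by simp
      finally show ?thesis .
    qed
    subgoal for a b u
    proof -
      assume ab: "a \<in> carrier R" "b \<in> carrier R" and u: "u \<in> carrier Q"
      obtain x where xy: "x \<in> carrier X" "u = p x" using ex[OF u] by blast
      have sx: "smult X b x \<in> carrier X" using lmod_closed[OF lmX ab(2) xy(1)] .
      have "smult Q (a \<otimes>\<^bsub>R\<^esub> b) u = p (smult X (a \<otimes>\<^bsub>R\<^esub> b) x)" using psmult[OF rmul[OF ab] xy(1)] xy(2) by simp
      also have "\<dots> = p (smult X a (smult X b x))" using lmod_assoc[OF lmX ab xy(1)] by simp
      also have "\<dots> = smult Q a (p (smult X b x))" by (rule psmult[OF ab(1) sx])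
      also have "\<dots> = smult Q a (smult Q b u)" using psmult[OF ab(2) xy(1)] xy(2) by simp
      finally show ?thesis .
    qed
    subgoal for u
    proof -
      assume u: "u \<in> carrier Q"
      obtain x where xy: "x \<in> carrier X" "u = p x" using ex[OF u] by blast
      have "smult Q \<one>\<^bsub>R\<^esub> u = p (smult X \<one>\<^bsub>R\<^esub> x)" using psmult[OF one xy(1)] xy(2) by simp
      also have "\<dots> = u" using lmod_one[OF lmX xy(1)] xy(2) by simp
      finally show ?thesis .
    qed
    done
qed

lemma Quot_lmodule:
  assumes "lmodule R X" "submod R X K" "inj i"
  shows "lmodule R (Quot X K i)" "hom_mod R X (Quot X K i) (qmap X K i)"
    "qmap X K i ` carrier X = carrier (Quot X K i)"
proof -
  interpret abelian_group X using lmod_ag[OF assms(1)] .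
  have A: "qmap X K i ` carrier X = carrier (Quot X K i)" using Quot_carrier[OF assms] by simp
  note B = Quot_add[OF assms, symmetric]
  have C: "qmap X K i \<zero>\<^bsub>X\<^esub> = \<zero>\<^bsub>Quot X K i\<^esub>" using Quot_zero[OF assms] by simp
  note D = Quot_smult[OF assms, symmetric]
  show "lmodule R (Quot X K i)" "hom_mod R X (Quot X K i) (qmap X K i)"
    using image_lmodule[OF assms(1) A B C D] by auto
  show "qmap X K i ` carrier X = carrier (Quot X K i)" using A .
qed

lemma Mgen_image:
  assumes "Mgen R M G" "lmodule R G" "lmodule R Q" "hom_mod R G Q p" "p ` carrier G = carrier Q"
  shows "Mgen R M Q"
proof -
  let ?S = "\<Union> {f ` carrier M | f. hom_mod R M Q f}"
  let ?T = "\<Union> {f ` carrier M | f. hom_mod R M G f}"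
  have "carrier Q \<subseteq> span_mod R Q ?S"
  proof
    fix u assume u: "u \<in> carrier Q"
    show "u \<in> span_mod R Q ?S" unfolding span_mod_def
    proof
      fix N assume N: "N \<in> {N. submod R Q N \<and> ?S \<subseteq> N}"
      let ?P = "{x \<in> carrier G. p x \<in> N}"
      have NN: "submod R Q N" "?S \<subseteq> N" using N by auto
      have P: "submod R G ?P" using submod_preimage[OF assms(2,3,4) NN(1)] .
      have "?T \<subseteq> ?P"
      proof
        fix y assume "y \<in> ?T"
        then obtain f m where f: "hom_mod R M G f" "m \<in> carrier M" "y = f m" by blast
        have h: "hom_mod R M Q (\<lambda>x. p (f x))" using hom_comp[OF f(1) assms(4)] .
        have m1: "p y \<in> (\<lambda>x. p (f x)) ` carrier M" using f(2,3) by simp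
        have m2: "(\<lambda>x. p (f x)) ` carrier M \<in> {g ` carrier M | g. hom_mod R M Q g}"
          by (rule CollectI, rule exI[of _ "\<lambda>x. p (f x)"]) (simp add: h)
        have "p y \<in> ?S" using m1 m2 by (rule UnionI[rotated])
        then show "y \<in> ?P" using NN(2) hom_closed[OF f(1) f(2)] f(3) by blast
      qed
      then have "?P \<in> {N. submod R G N \<and> ?T \<subseteq> N}" using P by simp
      then have "span_mod R G ?T \<subseteq> ?P" unfolding span_mod_def by (rule Inter_lower)
      then have "carrier G \<subseteq> ?P" using assms(1) unfolding Mgen_def by simp
      moreover obtain x where "x \<in> carrier G" "u = p x" using u assms(5) by blast
      ultimately show "u \<in> N" by blast
    qed
  qed
  moreover have "span_mod R Q ?S \<subseteq> carrier Q"
  proof -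
    have "?S \<subseteq> carrier Q"
    proof
      fix y assume "y \<in> ?S"
      then obtain f m where f: "hom_mod R M Q f" "m \<in> carrier M" "y = f m" by blast
      show "y \<in> carrier Q" using hom_closed[OF f(1) f(2)] f(3) by simp
    qed
    then show ?thesis unfolding span_mod_def using submod_carrier[OF assms(3)] by blast
  qed
  ultimately show ?thesis unfolding Mgen_def by blast
qed

section \<open>Projectivity and the product\<close>

lemma hom_id: "hom_mod R X X (\<lambda>x. x)" unfolding hom_mod_def by auto

lemma in_sigma_restr_self:
  fixes G :: "('r, 'u) module"
  assumes "lmodule R G" "Mgen R M G" "submod R G N0"
  shows "in_sigma TYPE('u) R M (restr G N0)"
  unfolding in_sigma_def
  by (rule exI[of _ G], rule exI[of _ N0], rule exI[of _ "\<lambda>x. x"]) (simp add: assms hom_id bij_betw_def inj_on_def)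

lemma proj_lift:
  fixes Y Y' :: "('r, 'x) module"
  assumes proj: "proj_sigma TYPE('u) R M"
    and lmY: "lmodule R Y" and lmY': "lmodule R Y'" and sig: "in_sigma TYPE('u) R M Y"
    and e: "hom_mod R Y Y' e" and esurj: "e ` carrier Y = carrier Y'" and NM: "N \<subseteq> carrier M"
  shows "prod_dot R M N Y' \<subseteq> e ` prod_dot R M N Y"
proof -
  interpret Y: abelian_group Y using lmod_ag[OF lmY] .
  interpret Y': abelian_group Y' using lmod_ag[OF lmY'] .
  define K where "K = e ` prod_dot R M N Y"
  have subK: "submod R Y' K"
    unfolding K_def by (rule submod_image[OF Y.abelian_group_axioms Y'.abelian_group_axioms e PD_submod[OF lmY]])
  define sg :: "'x \<Rightarrow> 'x set" where "sg = (\<lambda>x. {x})"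
  have injsg: "inj sg" unfolding sg_def by (simp add: inj_on_def)
  define W where "W = Quot Y' K sg"
  define q where "q = qmap Y' K sg"
  have lmW: "lmodule R W" and qhom: "hom_mod R Y' W q" and qsurj: "q ` carrier Y' = carrier W"
    using Quot_lmodule[OF lmY' subK injsg] unfolding W_def q_def by auto
  interpret W: abelian_group W using lmod_ag[OF lmW] .
  have qker: "\<And>y. y \<in> carrier Y' \<Longrightarrow> q y = \<zero>\<^bsub>W\<^esub> \<longleftrightarrow> y \<in> K"
    unfolding q_def W_def using qmap_kernel[OF lmY' subK injsg] by simp
  have cls: "\<forall>g. hom_mod R M W g \<longrightarrow> (\<forall>n\<in>N. g n = \<zero>\<^bsub>W\<^esub>)"
  proof (intro allI impI ballI)
    fix g n assume g: "hom_mod R M W g" and n: "n \<in> N"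
    obtain G :: "('r, 'u) module" and N0 \<phi> where
      G: "lmodule R G" "Mgen R M G" "submod R G N0" "hom_mod R Y (restr G N0) \<phi>"
      "bij_betw \<phi> (carrier Y) N0"
      using sig unfolding in_sigma_def by blast
    interpret G: abelian_group G using lmod_ag[OF G(1)] .
    define A where "A = restr G N0"
    have lmA: "lmodule R A" unfolding A_def by (rule submod_lmodule[OF G(1,3)])
    have cA: "carrier A = N0" unfolding A_def by simp
    have N0G: "N0 \<subseteq> carrier G" using submod_sub[OF G(3)] .
    define \<psi> where "\<psi> = inv_into (carrier Y) \<phi>"
    have \<psi>hom: "hom_mod R A Y \<psi>"
      unfolding \<psi>_def A_def using hom_inv[OF lmY G(4)] G(5) by simp
    have \<psi>\<phi>: "\<And>y. y \<in> carrier Y \<Longrightarrow> \<psi> (\<phi> y) = y"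
      unfolding \<psi>_def using G(5) by (simp add: bij_betw_imp_inj_on inv_into_f_f)
    have \<phi>c: "\<And>y. y \<in> carrier Y \<Longrightarrow> \<phi> y \<in> N0" using G(5) by (auto simp: bij_betw_def)
    define c where "c = (\<lambda>a. q (e (\<psi> a)))"
    have chom: "hom_mod R A W c" unfolding c_def
      by (rule hom_comp[OF hom_comp[OF \<psi>hom e] qhom])
    define KA where "KA = {a \<in> carrier A. c a \<in> {\<zero>\<^bsub>W\<^esub>}}"
    have sub0: "submod R W {\<zero>\<^bsub>W\<^esub>}"
      unfolding submod_def using lmod_smult_zero[OF lmW] by simp
    have KAA: "submod R A KA" unfolding KA_def by (rule submod_preimage[OF lmA lmW chom sub0])
    have KAG: "submod R G KA" and KAN0: "KA \<subseteq> N0"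
      using KAA submod_restr_iff[OF G.abelian_group_axioms G(3)] unfolding A_def by auto
    define Qg where "Qg = Quot G KA (\<lambda>x. x)"
    define qg where "qg = qmap G KA (\<lambda>x. x)"
    have injid: "inj (\<lambda>x::'u. x)" by (simp add: inj_on_def)
    have lmQg: "lmodule R Qg" and qghom: "hom_mod R G Qg qg" and qgsurj: "qg ` carrier G = carrier Qg"
      using Quot_lmodule[OF G(1) KAG injid] unfolding Qg_def qg_def by auto
    interpret Qg: abelian_group Qg using lmod_ag[OF lmQg] .
    have MQg: "Mgen R M Qg" by (rule Mgen_image[OF G(2) G(1) lmQg qghom qgsurj])
    define N1 where "N1 = qg ` N0"
    have subN1: "submod R Qg N1"
      unfolding N1_def by (rule submod_image[OF G.abelian_group_axioms Qg.abelian_group_axioms qghom G(3)])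
    define B where "B = restr Qg N1"
    have lmB: "lmodule R B" unfolding B_def by (rule submod_lmodule[OF lmQg subN1])
    have sigA: "in_sigma TYPE('u) R M A" unfolding A_def by (rule in_sigma_restr_self[OF G(1,2,3)])
    have sigB: "in_sigma TYPE('u) R M B" unfolding B_def by (rule in_sigma_restr_self[OF lmQg MQg subN1])
    have qgAB: "hom_mod R A B qg" unfolding A_def B_def
      by (rule hom_restr_cod[OF hom_restr_dom[OF qghom N0G]]) (simp add: N1_def)
    have qgABs: "qg ` carrier A = carrier B" unfolding A_def B_def N1_def by simp
    have qg_eq: "\<And>a1 a2. a1 \<in> N0 \<Longrightarrow> a2 \<in> N0 \<Longrightarrow> qg a1 = qg a2 \<longleftrightarrow> c a1 = c a2"
    proof -
      fix a1 a2 assume a: "a1 \<in> N0" "a2 \<in> N0"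
      have aG: "a1 \<in> carrier G" "a2 \<in> carrier G" using a N0G by auto
      have mA: "a1 \<ominus>\<^bsub>G\<^esub> a2 \<in> N0" using submod_minus[OF G(3) a] .
      have "qg a1 = qg a2 \<longleftrightarrow> a1 \<ominus>\<^bsub>G\<^esub> a2 \<in> KA"
        unfolding qg_def using qmap_eq_iff[OF G(1) KAG injid aG] .
      also have "\<dots> \<longleftrightarrow> c (a1 \<ominus>\<^bsub>G\<^esub> a2) = \<zero>\<^bsub>W\<^esub>" using mA unfolding KA_def cA by simp
      also have "c (a1 \<ominus>\<^bsub>G\<^esub> a2) = c a1 \<ominus>\<^bsub>W\<^esub> c a2"
      proof -
        have agA: "abelian_group A" using lmod_ag[OF lmA] .
        have "c (a1 \<ominus>\<^bsub>A\<^esub> a2) = c a1 \<ominus>\<^bsub>W\<^esub> c a2"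
          by (rule hom_minus[OF agA W.abelian_group_axioms chom]) (use a cA in auto)
        moreover have "a1 \<ominus>\<^bsub>A\<^esub> a2 = a1 \<ominus>\<^bsub>G\<^esub> a2"
          unfolding A_def by (rule restr_minus[OF G.abelian_group_axioms G(3) a])
        ultimately show ?thesis by simp
      qed
      also have "c a1 \<ominus>\<^bsub>W\<^esub> c a2 = \<zero>\<^bsub>W\<^esub> \<longleftrightarrow> c a1 = c a2"
      proof -
        have cc: "c a1 \<in> carrier W" "c a2 \<in> carrier W" using hom_closed[OF chom] a cA by auto
        show ?thesis using W.ag_h7[OF cc] W.ag_h4[OF cc(1)] by auto
      qed
      finally show "qg a1 = qg a2 \<longleftrightarrow> c a1 = c a2" .
    qed
    define \<kappa> where "\<kappa> = (\<lambda>b. c (SOME a. a \<in> N0 \<and> b = qg a))"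
    have \<kappa>qg: "\<And>a. a \<in> N0 \<Longrightarrow> \<kappa> (qg a) = c a"
    proof -
      fix a assume a: "a \<in> N0"
      have ex: "\<exists>a'. a' \<in> N0 \<and> qg a = qg a'" using a by blast
      define a' where "a' = (SOME a'. a' \<in> N0 \<and> qg a = qg a')"
      have a': "a' \<in> N0 \<and> qg a = qg a'" unfolding a'_def by (rule someI_ex[OF ex])
      have "\<kappa> (qg a) = c a'" unfolding \<kappa>_def a'_def by simp
      also have "\<dots> = c a" using qg_eq[of a a'] a a' by simp
      finally show "\<kappa> (qg a) = c a" .
    qed
    have \<kappa>hom: "hom_mod R B W \<kappa>" unfolding hom_mod_def
    proof (intro conjI ballI)
      show "\<kappa> \<in> carrier B \<rightarrow> carrier W"
      proof
        fix b assume "b \<in> carrier B"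
        then obtain a where a: "a \<in> N0" "b = qg a" unfolding B_def N1_def by auto
        show "\<kappa> b \<in> carrier W" using \<kappa>qg[OF a(1)] a(2) hom_closed[OF chom, of a] a(1) cA by simp
      qed
    next
      fix b1 b2 assume "b1 \<in> carrier B" "b2 \<in> carrier B"
      then obtain a1 a2 where a: "a1 \<in> N0" "b1 = qg a1" "a2 \<in> N0" "b2 = qg a2" unfolding B_def N1_def by auto
      have aG: "a1 \<in> carrier G" "a2 \<in> carrier G" using a N0G by auto
      have s: "a1 \<oplus>\<^bsub>G\<^esub> a2 \<in> N0" using submod_add[OF G(3) a(1) a(3)] .
      have "b1 \<oplus>\<^bsub>B\<^esub> b2 = qg (a1 \<oplus>\<^bsub>G\<^esub> a2)"
        using Quot_add[OF G(1) KAG injid aG] a unfolding B_def Qg_def qg_def by simp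
      then have "\<kappa> (b1 \<oplus>\<^bsub>B\<^esub> b2) = c (a1 \<oplus>\<^bsub>G\<^esub> a2)" using \<kappa>qg[OF s] by simp
      also have "\<dots> = c a1 \<oplus>\<^bsub>W\<^esub> c a2"
        using hom_add[OF chom, of a1 a2] a cA unfolding A_def by simp
      also have "\<dots> = \<kappa> b1 \<oplus>\<^bsub>W\<^esub> \<kappa> b2" using \<kappa>qg a by simp
      finally show "\<kappa> (b1 \<oplus>\<^bsub>B\<^esub> b2) = \<kappa> b1 \<oplus>\<^bsub>W\<^esub> \<kappa> b2" .
    next
      fix r b assume r: "r \<in> carrier R" and "b \<in> carrier B"
      then obtain a where a: "a \<in> N0" "b = qg a" unfolding B_def N1_def by auto
      have aG: "a \<in> carrier G" using a N0G by auto
      have s: "smult G r a \<in> N0" using submod_smult[OF G(3) r a(1)] .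
      have "smult B r b = qg (smult G r a)"
        using Quot_smult[OF G(1) KAG injid r aG] a unfolding B_def Qg_def qg_def by simp
      then have "\<kappa> (smult B r b) = c (smult G r a)" using \<kappa>qg[OF s] by simp
      also have "\<dots> = smult W r (c a)"
        using hom_smult[OF chom r, of a] a cA unfolding A_def by simp
      also have "\<dots> = smult W r (\<kappa> b)" using \<kappa>qg a by simp
      finally show "\<kappa> (smult B r b) = smult W r (\<kappa> b)" .
    qed
    have \<kappa>bij: "bij_betw \<kappa> (carrier B) (carrier W)"
      unfolding bij_betw_def
    proof
      show "inj_on \<kappa> (carrier B)"
      proof (rule inj_onI)
        fix b1 b2 assume "b1 \<in> carrier B" "b2 \<in> carrier B" and e12: "\<kappa> b1 = \<kappa> b2"
        then obtain a1 a2 where a: "a1 \<in> N0" "b1 = qg a1" "a2 \<in> N0" "b2 = qg a2" unfolding B_def N1_def by auto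
        have "c a1 = c a2" using e12 \<kappa>qg a by simp
        then show "b1 = b2" using qg_eq[OF a(1) a(3)] a by simp
      qed
      show "\<kappa> ` carrier B = carrier W"
      proof
        show "\<kappa> ` carrier B \<subseteq> carrier W" using \<kappa>hom unfolding hom_mod_def by auto
        show "carrier W \<subseteq> \<kappa> ` carrier B"
        proof
          fix w assume "w \<in> carrier W"
          then obtain y' where y': "y' \<in> carrier Y'" "w = q y'" using qsurj by auto
          then obtain y where y: "y \<in> carrier Y" "y' = e y" using esurj by auto
          have a: "\<phi> y \<in> N0" using \<phi>c[OF y(1)] .
          have "\<kappa> (qg (\<phi> y)) = c (\<phi> y)" using \<kappa>qg[OF a] .
          also have "\<dots> = w" unfolding c_def using \<psi>\<phi>[OF y(1)] y y' by simp
          finally have "w = \<kappa> (qg (\<phi> y))" by simp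
          moreover have "qg (\<phi> y) \<in> carrier B" using a unfolding B_def N1_def by simp
          ultimately show "w \<in> \<kappa> ` carrier B" by blast
        qed
      qed
    qed
    define f where "f = (\<lambda>m. inv_into (carrier B) \<kappa> (g m))"
    have fhom: "hom_mod R M B f" unfolding f_def
      by (rule hom_comp[OF g hom_inv[OF lmB \<kappa>hom \<kappa>bij]])
    have pre: "lmodule R A \<and> lmodule R B \<and> in_sigma TYPE('u) R M A \<and> in_sigma TYPE('u) R M B \<and>
      hom_mod R A B qg \<and> qg ` carrier A = carrier B \<and> hom_mod R M B f"
      using lmA lmB sigA sigB qgAB qgABs fhom by simp
    have "\<exists>h. hom_mod R M A h \<and> (\<forall>m\<in>carrier M. qg (h m) = f m)"
      by (rule mp[OF proj[unfolded proj_sigma_def, THEN spec[of _ A], THEN spec[of _ B],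
            THEN spec[of _ qg], THEN spec[of _ f]] pre])
    then obtain h where h: "hom_mod R M A h" "\<forall>m\<in>carrier M. qg (h m) = f m" by blast
    have nM: "n \<in> carrier M" using n NM by auto
    have "(\<lambda>x. \<psi> (h x)) n \<in> prod_dot R M N Y" by (rule PD_gen[OF hom_comp[OF h(1) \<psi>hom] n NM])
    then have "e (\<psi> (h n)) \<in> K" unfolding K_def by simp
    moreover have "e (\<psi> (h n)) \<in> carrier Y'"
      using hom_closed[OF hom_comp[OF hom_comp[OF h(1) \<psi>hom] e] nM] by simp
    ultimately have c0: "c (h n) = \<zero>\<^bsub>W\<^esub>" unfolding c_def using qker by simp
    have hn: "h n \<in> N0" using hom_closed[OF h(1) nM] cA by simp
    have fn: "f n = qg (h n)" using h(2) nM by simp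
    have gnW: "g n \<in> carrier W" using hom_closed[OF g nM] .
    have "g n \<in> \<kappa> ` carrier B" using gnW \<kappa>bij by (simp add: bij_betw_def)
    then have "\<kappa> (f n) = g n" unfolding f_def by (rule f_inv_into_f)
    then show "g n = \<zero>\<^bsub>W\<^esub>" using fn \<kappa>qg[OF hn] c0 by simp
  qed
  show ?thesis
  proof
    fix y assume y: "y \<in> prod_dot R M N Y'"
    have yc: "y \<in> carrier Y'" using y PD_sub[of R M N Y'] by auto
    have "q y = \<zero>\<^bsub>W\<^esub>" by (rule PD_memD[OF y lmW cls qhom])
    then have "y \<in> K" using qker[OF yc] by simp
    then show "y \<in> e ` prod_dot R M N Y" unfolding K_def .
  qed
qed

lemma in_sigma_sub:
  fixes X :: "('r, 'x) module"
  assumes lmX: "lmodule R X" and sig: "in_sigma TYPE('u) R M X" and Z: "submod R X Z"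
  shows "in_sigma TYPE('u) R M (restr X Z)"
proof -
  obtain G :: "('r, 'u) module" and N0 \<phi> where
    G: "lmodule R G" "Mgen R M G" "submod R G N0" "hom_mod R X (restr G N0) \<phi>"
    "bij_betw \<phi> (carrier X) N0"
    using sig unfolding in_sigma_def by blast
  have N0G: "N0 \<subseteq> carrier G" using submod_sub[OF G(3)] .
  have ZX: "Z \<subseteq> carrier X" using submod_sub[OF Z] .
  have \<phi>G: "hom_mod R X G \<phi>" by (rule hom_from_restr_cod[OF G(4) N0G])
  have sub: "submod R G (\<phi> ` Z)"
    by (rule submod_image[OF lmod_ag[OF lmX] lmod_ag[OF G(1)] \<phi>G Z])
  have h: "hom_mod R (restr X Z) (restr G (\<phi> ` Z)) \<phi>"
    by (rule hom_restr_cod[OF hom_restr_dom[OF \<phi>G ZX]]) simp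
  have b: "bij_betw \<phi> Z (\<phi> ` Z)"
    using G(5) ZX unfolding bij_betw_def by (auto intro: inj_on_subset)
  show ?thesis unfolding in_sigma_def
    by (rule exI[of _ G], rule exI[of _ "\<phi> ` Z"], rule exI[of _ \<phi>]) (simp add: G(1,2) sub h b)
qed

section \<open>M-prime submodules and the radical\<close>

lemma submod_Int:
  assumes "submod R X P" "submod R X Z"
  shows "submod R X (P \<inter> Z)"
  using assms unfolding submod_def by auto

lemma prime_restr:
  fixes X :: "('r, 'x) module"
  assumes lmX: "lmodule R X" and P: "M_prime R M X P" and Z: "submod R X Z" and nZ: "\<not> Z \<subseteq> P"
  shows "M_prime R M (restr X Z) (P \<inter> Z)"
proof -
  have agX: "abelian_group X" using lmod_ag[OF lmX] .
  have subP: "submod R X P" using P unfolding M_prime_def by blast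
  have ZX: "Z \<subseteq> carrier X" using submod_sub[OF Z] .
  have s1: "submod R (restr X Z) (P \<inter> Z)"
    using submod_restr_iff[OF agX Z] submod_Int[OF subP Z] by simp
  have s2: "P \<inter> Z \<noteq> carrier (restr X Z)" using nZ by auto
  have s3: "prod_dot R M N (restr X Z) \<subseteq> P \<inter> Z \<or> Z' \<subseteq> P \<inter> Z"
    if N: "submod R M N" and Z': "submod R (restr X Z) Z'"
      and inc: "prod_dot R M N (restr (restr X Z) Z') \<subseteq> P \<inter> Z" for N Z'
  proof -
    have Z'2: "submod R X Z'" "Z' \<subseteq> Z" using submod_restr_iff[OF agX Z] Z' by auto
    have "prod_dot R M N (restr X Z') \<subseteq> P" using inc by auto
    moreover have Pp: "\<forall>N Z. submod R M N \<longrightarrow> submod R X Z \<longrightarrow>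
        prod_dot R M N (restr X Z) \<subseteq> P \<longrightarrow> prod_dot R M N X \<subseteq> P \<or> Z \<subseteq> P"
      using P by (simp add: M_prime_def)
    ultimately have "prod_dot R M N X \<subseteq> P \<or> Z' \<subseteq> P"
      using N Z'2(1) by simp
    then show ?thesis
    proof
      assume "prod_dot R M N X \<subseteq> P"
      moreover have "prod_dot R M N (restr X Z) \<subseteq> prod_dot R M N X" by (rule PD_mono[OF ZX])
      moreover have "prod_dot R M N (restr X Z) \<subseteq> Z" using PD_sub[of R M N "restr X Z"] by simp
      ultimately show ?thesis by blast
    next
      assume "Z' \<subseteq> P" then show ?thesis using Z'2 by blast
    qed
  qed
  show ?thesis unfolding M_prime_def
    by (intro conjI s1 s2 allI impI, rule s3)
qed

lemma rad_sub: "radM R M X \<subseteq> carrier X"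
proof (cases "\<exists>P. M_prime R M X P")
  case True
  then obtain P where P: "M_prime R M X P" by blast
  then have "submod R X P" by (simp add: M_prime_def)
  then have "P \<subseteq> carrier X" by (rule submod_sub)
  moreover have "radM R M X \<subseteq> P"
  proof -
    have "radM R M X = \<Inter> {P. M_prime R M X P}" by (simp add: radM_def True)
    then show ?thesis using P by (simp add: Inter_lower)
  qed
  ultimately show ?thesis by blast
next
  case False
  have "radM R M X = carrier X" unfolding radM_def using False by (rule if_not_P)
  then show ?thesis by simp
qed

lemma rad_submod:
  assumes "lmodule R X" shows "submod R X (radM R M X)"
proof (cases "\<exists>P. M_prime R M X P")
  case True
  then have "radM R M X = \<Inter> {P. M_prime R M X P}" unfolding radM_def by simp
  moreover have "submod R X (\<Inter> {P. M_prime R M X P})"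
  proof (rule submod_Inter)
    show "{P. M_prime R M X P} \<noteq> {}" using True by simp
    fix P assume "P \<in> {P. M_prime R M X P}"
    then show "submod R X P" by (simp add: M_prime_def)
  qed
  ultimately show ?thesis by simp
next
  case False
  have "radM R M X = carrier X" unfolding radM_def using False by (rule if_not_P)
  then show ?thesis using submod_carrier[OF assms] by simp
qed

lemma rad_mem:
  assumes "x \<in> radM R M X" "M_prime R M X P" shows "x \<in> P"
proof -
  have e: "\<exists>P. M_prime R M X P" using assms(2) by blast
  have "x \<in> \<Inter> {P. M_prime R M X P}" using assms(1) e unfolding radM_def by simp
  then show ?thesis using assms(2) by blast
qed

lemma rad_memI:
  assumes "x \<in> carrier X" "\<And>P. M_prime R M X P \<Longrightarrow> x \<in> P" shows "x \<in> radM R M X"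
proof (cases "\<exists>P. M_prime R M X P")
  case True
  have "radM R M X = \<Inter> {P. M_prime R M X P}" by (simp add: radM_def True)
  moreover have "x \<in> \<Inter> {P. M_prime R M X P}"
  proof (rule InterI)
    fix P assume "P \<in> {P. M_prime R M X P}"
    then show "x \<in> P" using assms(2) by simp
  qed
  ultimately show ?thesis by simp
next
  case False
  have "radM R M X = carrier X" unfolding radM_def using False by (rule if_not_P)
  then show ?thesis using assms(1) by simp
qed

lemma rad_restr_sub:
  fixes X :: "('r, 'x) module"
  assumes lmX: "lmodule R X" and Z: "submod R X Z"
  shows "radM R M (restr X Z) \<subseteq> radM R M X"
proof
  fix x assume x: "x \<in> radM R M (restr X Z)"
  have xZ: "x \<in> Z" using x rad_sub[of R M "restr X Z"] by auto
  have ZX: "Z \<subseteq> carrier X" using submod_sub[OF Z] .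
  show "x \<in> radM R M X"
  proof (rule rad_memI)
    show "x \<in> carrier X" using xZ ZX by auto
    fix P assume P: "M_prime R M X P"
    show "x \<in> P"
    proof (cases "Z \<subseteq> P")
      case True then show ?thesis using xZ by auto
    next
      case False
      have "M_prime R M (restr X Z) (P \<inter> Z)" by (rule prime_restr[OF lmX P Z False])
      then show ?thesis using rad_mem[OF x] by blast
    qed
  qed
qed

lemma finsum_neg:
  assumes "abelian_group X" "s \<in> F \<rightarrow> carrier X"
  shows "\<ominus>\<^bsub>X\<^esub> finsum X s F = finsum X (\<lambda>l. \<ominus>\<^bsub>X\<^esub> s l) F"
proof -
  interpret abelian_group X by fact
  have c1: "(\<lambda>l. \<ominus>\<^bsub>X\<^esub> s l) \<in> F \<rightarrow> carrier X" using assms(2) by auto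
  have "finsum X (\<lambda>l. \<ominus>\<^bsub>X\<^esub> s l) F \<oplus>\<^bsub>X\<^esub> finsum X s F = finsum X (\<lambda>l. \<ominus>\<^bsub>X\<^esub> s l \<oplus>\<^bsub>X\<^esub> s l) F"
    by (rule finsum_addf[OF c1 assms(2), symmetric])
  also have "\<dots> = finsum X (\<lambda>l. \<zero>\<^bsub>X\<^esub>) F"
  proof (rule finsum_cong')
    fix i assume "i \<in> F"
    then have "s i \<in> carrier X" using assms(2) by (rule funcset_mem[rotated])
    then show "\<ominus>\<^bsub>X\<^esub> s i \<oplus>\<^bsub>X\<^esub> s i = \<zero>\<^bsub>X\<^esub>" by (rule l_neg)
  qed auto
  also have "\<dots> = \<zero>\<^bsub>X\<^esub>" by (rule finsum_zero)
  finally have e: "finsum X (\<lambda>l. \<ominus>\<^bsub>X\<^esub> s l) F \<oplus>\<^bsub>X\<^esub> finsum X s F = \<zero>\<^bsub>X\<^esub>" .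
  show ?thesis by (rule minus_equality[OF e]) (use assms(2) c1 in auto)
qed

lemma finsum_smult:
  assumes "lmodule R X" "a \<in> carrier R" "finite F" "s \<in> F \<rightarrow> carrier X"
  shows "smult X a (finsum X s F) = finsum X (\<lambda>l. smult X a (s l)) F"
  using assms(3,4)
proof (induction F rule: finite_induct)
  case empty
  interpret abelian_group X using lmod_ag[OF assms(1)] .
  show ?case using lmod_smult_zero[OF assms(1,2)] by simp
next
  case (insert l F)
  interpret abelian_group X using lmod_ag[OF assms(1)] .
  have sF: "s \<in> F \<rightarrow> carrier X" "s l \<in> carrier X" using insert by auto
  have aF: "(\<lambda>l. smult X a (s l)) \<in> F \<rightarrow> carrier X" "smult X a (s l) \<in> carrier X"
    using sF lmod_closed[OF assms(1,2)] by auto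
  have "smult X a (finsum X s (insert l F)) = smult X a (s l \<oplus>\<^bsub>X\<^esub> finsum X s F)"
    using finsum_insert[OF insert(1,2) sF] by simp
  also have "\<dots> = smult X a (s l) \<oplus>\<^bsub>X\<^esub> smult X a (finsum X s F)"
    by (rule lmod_distr[OF assms(1,2) sF(2) finsum_closed[OF sF(1)]])
  also have "\<dots> = smult X a (s l) \<oplus>\<^bsub>X\<^esub> finsum X (\<lambda>l. smult X a (s l)) F"
    using insert.IH[OF sF(1)] by simp
  also have "\<dots> = finsum X (\<lambda>l. smult X a (s l)) (insert l F)"
    using finsum_insert[OF insert(1,2) aF] by simp
  finally show ?case .
qed

lemma sum_fam_memI:
  assumes "finite F" "F \<subseteq> L" "\<And>l. l \<in> F \<Longrightarrow> s l \<in> S l"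
  shows "finsum X s F \<in> sum_fam X L S"
  unfolding sum_fam_def using assms by blast

lemma sum_fam_submod:
  assumes lmX: "lmodule R X" and S: "\<And>l. l \<in> L \<Longrightarrow> submod R X (S l)"
  shows "submod R X (sum_fam X L S)"
proof -
  interpret abelian_group X using lmod_ag[OF lmX] .
  have Sc: "\<And>l. l \<in> L \<Longrightarrow> S l \<subseteq> carrier X" using submod_sub[OF S] by blast
  show ?thesis unfolding submod_def
  proof (intro conjI ballI)
    show "sum_fam X L S \<subseteq> carrier X"
    proof
      fix u assume "u \<in> sum_fam X L S"
      then obtain s F where u: "u = finsum X s F" "finite F" "F \<subseteq> L" "\<forall>l\<in>F. s l \<in> S l"
        unfolding sum_fam_def by blast
      have "s \<in> F \<rightarrow> carrier X" using u Sc by blast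
      then show "u \<in> carrier X" using u(1) by simp
    qed
    have "finsum X (\<lambda>l. \<zero>\<^bsub>X\<^esub>) {} \<in> sum_fam X L S"
      unfolding sum_fam_def by (rule CollectI, rule exI[of _ "\<lambda>l. \<zero>\<^bsub>X\<^esub>"], rule exI[of _ "{}"]) simp
    then show "\<zero>\<^bsub>X\<^esub> \<in> sum_fam X L S" by simp
  next
    fix u v assume "u \<in> sum_fam X L S" "v \<in> sum_fam X L S"
    then obtain s F t G where u: "u = finsum X s F" "finite F" "F \<subseteq> L" "\<forall>l\<in>F. s l \<in> S l"
      and v: "v = finsum X t G" "finite G" "G \<subseteq> L" "\<forall>l\<in>G. t l \<in> S l"
      unfolding sum_fam_def by blast
    define H where "H = F \<union> G"
    define s' where "s' = (\<lambda>l. if l \<in> F then s l else \<zero>\<^bsub>X\<^esub>)"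
    define t' where "t' = (\<lambda>l. if l \<in> G then t l else \<zero>\<^bsub>X\<^esub>)"
    have H: "finite H" "H \<subseteq> L" using u v H_def by auto
    have s'S: "s' l \<in> S l" if l: "l \<in> H" for l
    proof -
      have "l \<in> L" using l H by auto
      then show ?thesis unfolding s'_def using u(4) submod_zero[OF S[of l]] by auto
    qed
    have t'S: "t' l \<in> S l" if l: "l \<in> H" for l
    proof -
      have "l \<in> L" using l H by auto
      then show ?thesis unfolding t'_def using v(4) submod_zero[OF S[of l]] by auto
    qed
    have s'c: "s' \<in> H \<rightarrow> carrier X" using s'S Sc H by blast
    have t'c: "t' \<in> H \<rightarrow> carrier X" using t'S Sc H by blast
    have us: "u = finsum X s' H" unfolding u(1)
      by (rule add.finprod_mono_neutral_cong_left[OF H(1) _ _ _ s'c]) (auto simp: H_def s'_def)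
    have vt: "v = finsum X t' H" unfolding v(1)
      by (rule add.finprod_mono_neutral_cong_left[OF H(1) _ _ _ t'c]) (auto simp: H_def t'_def)
    have "u \<oplus>\<^bsub>X\<^esub> v = finsum X (\<lambda>l. s' l \<oplus>\<^bsub>X\<^esub> t' l) H"
      using finsum_addf[OF s'c t'c] us vt by simp
    moreover have "finsum X (\<lambda>l. s' l \<oplus>\<^bsub>X\<^esub> t' l) H \<in> sum_fam X L S"
    proof (rule sum_fam_memI[OF H])
      fix l assume l: "l \<in> H"
      then have "l \<in> L" using H by auto
      then show "s' l \<oplus>\<^bsub>X\<^esub> t' l \<in> S l" by (rule submod_add[OF S s'S[OF l] t'S[OF l]])
    qed
    ultimately show "u \<oplus>\<^bsub>X\<^esub> v \<in> sum_fam X L S" by simp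
  next
    fix u assume "u \<in> sum_fam X L S"
    then obtain s F where u: "u = finsum X s F" "finite F" "F \<subseteq> L" "\<forall>l\<in>F. s l \<in> S l"
      unfolding sum_fam_def by blast
    have sc: "s \<in> F \<rightarrow> carrier X" using u Sc by blast
    have "\<ominus>\<^bsub>X\<^esub> u = finsum X (\<lambda>l. \<ominus>\<^bsub>X\<^esub> s l) F" using finsum_neg[OF lmod_ag[OF lmX] sc] u(1) by simp
    moreover have "finsum X (\<lambda>l. \<ominus>\<^bsub>X\<^esub> s l) F \<in> sum_fam X L S"
    proof (rule sum_fam_memI[OF u(2,3)])
      fix l assume l: "l \<in> F"
      then have "l \<in> L" using u(3) by auto
      then show "\<ominus>\<^bsub>X\<^esub> s l \<in> S l" by (rule submod_neg[OF S]) (use u(4) l in auto)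
    qed
    ultimately show "\<ominus>\<^bsub>X\<^esub> u \<in> sum_fam X L S" by simp
  next
    fix a u assume a: "a \<in> carrier R" and "u \<in> sum_fam X L S"
    then obtain s F where u: "u = finsum X s F" "finite F" "F \<subseteq> L" "\<forall>l\<in>F. s l \<in> S l"
      unfolding sum_fam_def by blast
    have sc: "s \<in> F \<rightarrow> carrier X" using u Sc by blast
    have "smult X a u = finsum X (\<lambda>l. smult X a (s l)) F" using finsum_smult[OF lmX a u(2) sc] u(1) by simp
    moreover have "finsum X (\<lambda>l. smult X a (s l)) F \<in> sum_fam X L S"
    proof (rule sum_fam_memI[OF u(2,3)])
      fix l assume l: "l \<in> F"
      then have "l \<in> L" using u(3) by auto
      then show "smult X a (s l) \<in> S l" using submod_smult[OF S[of l] a, of "s l"] u(4) l by auto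
    qed
    ultimately show "smult X a u \<in> sum_fam X L S" by simp
  qed
qed

section \<open>Projection onto a direct summand\<close>

definition dproj :: "('r, 'x) module \<Rightarrow> 'x set \<Rightarrow> 'x set \<Rightarrow> 'x \<Rightarrow> 'x" where
  "dproj X A D x = (THE a. a \<in> A \<and> (\<exists>d\<in>D. x = a \<oplus>\<^bsub>X\<^esub> d))"

context
  fixes R :: "('r, 'c) ring_scheme" and X :: "('r, 'x) module" and A D :: "'x set"
  assumes lmX: "lmodule R X" and subA: "submod R X A" and subD: "submod R X D"
    and AD: "A \<inter> D \<subseteq> {\<zero>\<^bsub>X\<^esub>}"
    and dec: "\<And>x. x \<in> carrier X \<Longrightarrow> \<exists>a\<in>A. \<exists>d\<in>D. x = a \<oplus>\<^bsub>X\<^esub> d"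
begin

lemma dsum_uniq:
  assumes "a \<in> A" "a' \<in> A" "d \<in> D" "d' \<in> D" "a \<oplus>\<^bsub>X\<^esub> d = a' \<oplus>\<^bsub>X\<^esub> d'"
  shows "a = a'"
proof -
  interpret abelian_group X using lmod_ag[OF lmX] .
  have Ac: "a \<in> carrier X" "a' \<in> carrier X" using assms submod_sub[OF subA] by auto
  have Dc: "d \<in> carrier X" "d' \<in> carrier X" using assms submod_sub[OF subD] by auto
  have "(a \<ominus>\<^bsub>X\<^esub> a') \<oplus>\<^bsub>X\<^esub> (d \<ominus>\<^bsub>X\<^esub> d') = (a \<oplus>\<^bsub>X\<^esub> d) \<ominus>\<^bsub>X\<^esub> (a' \<oplus>\<^bsub>X\<^esub> d')"
    using ag_h3[OF Ac(1) Dc(1) Ac(2) Dc(2)] by simp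
  also have "\<dots> = \<zero>\<^bsub>X\<^esub>" using assms(5) ag_h4 Ac Dc by simp
  finally have e: "(a \<ominus>\<^bsub>X\<^esub> a') \<oplus>\<^bsub>X\<^esub> (d \<ominus>\<^bsub>X\<^esub> d') = \<zero>\<^bsub>X\<^esub>" .
  have "\<ominus>\<^bsub>X\<^esub> (d \<ominus>\<^bsub>X\<^esub> d') = a \<ominus>\<^bsub>X\<^esub> a'"
    by (rule minus_equality[OF e]) (use Ac Dc in auto)
  then have "a \<ominus>\<^bsub>X\<^esub> a' = d' \<ominus>\<^bsub>X\<^esub> d" using ag_h2[OF Dc] by simp
  then have "a \<ominus>\<^bsub>X\<^esub> a' \<in> A \<inter> D"
    using submod_minus[OF subA assms(1,2)] submod_minus[OF subD assms(4,3)] by simp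
  then have "a \<ominus>\<^bsub>X\<^esub> a' = \<zero>\<^bsub>X\<^esub>" using AD by blast
  then show ?thesis using ag_h7 Ac by blast
qed

lemma dproj_eq:
  assumes "a \<in> A" "d \<in> D"
  shows "dproj X A D (a \<oplus>\<^bsub>X\<^esub> d) = a"
  unfolding dproj_def
proof (rule the_equality)
  show "a \<in> A \<and> (\<exists>d'\<in>D. a \<oplus>\<^bsub>X\<^esub> d = a \<oplus>\<^bsub>X\<^esub> d')" using assms by blast
  fix a' assume "a' \<in> A \<and> (\<exists>d'\<in>D. a \<oplus>\<^bsub>X\<^esub> d = a' \<oplus>\<^bsub>X\<^esub> d')"
  then obtain d' where a': "a' \<in> A" "d' \<in> D" "a \<oplus>\<^bsub>X\<^esub> d = a' \<oplus>\<^bsub>X\<^esub> d'" by blast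
  show "a' = a" using dsum_uniq[OF assms(1) a'(1) assms(2) a'(2) a'(3)] by simp
qed

lemma dproj_hom: "hom_mod R X (restr X A) (dproj X A D)"
proof -
  interpret abelian_group X using lmod_ag[OF lmX] .
  have Ac: "A \<subseteq> carrier X" "D \<subseteq> carrier X" using submod_sub[OF subA] submod_sub[OF subD] by auto
  show ?thesis unfolding hom_mod_def
  proof (intro conjI ballI)
    show "dproj X A D \<in> carrier X \<rightarrow> carrier (restr X A)"
    proof
      fix x assume "x \<in> carrier X"
      then obtain a d where ad: "a \<in> A" "d \<in> D" "x = a \<oplus>\<^bsub>X\<^esub> d" using dec by blast
      show "dproj X A D x \<in> carrier (restr X A)" using dproj_eq[OF ad(1,2)] ad by simp
    qed
  next
    fix x y assume xy: "x \<in> carrier X" "y \<in> carrier X"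
    obtain a d where ad1: "a \<in> A" "d \<in> D" "x = a \<oplus>\<^bsub>X\<^esub> d" using dec[OF xy(1)] by blast
    obtain a' d' where ad2: "a' \<in> A" "d' \<in> D" "y = a' \<oplus>\<^bsub>X\<^esub> d'" using dec[OF xy(2)] by blast
    note ad = ad1 ad2
    have c: "a \<in> carrier X" "d \<in> carrier X" "a' \<in> carrier X" "d' \<in> carrier X" using ad Ac by auto
    have "x \<oplus>\<^bsub>X\<^esub> y = (a \<oplus>\<^bsub>X\<^esub> a') \<oplus>\<^bsub>X\<^esub> (d \<oplus>\<^bsub>X\<^esub> d')" using ad c by (simp add: a_ac)
    then have "dproj X A D (x \<oplus>\<^bsub>X\<^esub> y) = a \<oplus>\<^bsub>X\<^esub> a'"
      using dproj_eq[OF submod_add[OF subA ad(1,4)] submod_add[OF subD ad(2,5)]] by simp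
    then show "dproj X A D (x \<oplus>\<^bsub>X\<^esub> y) = dproj X A D x \<oplus>\<^bsub>restr X A\<^esub> dproj X A D y"
      using dproj_eq[OF ad(1,2)] dproj_eq[OF ad(4,5)] ad by simp
  next
    fix r x assume r: "r \<in> carrier R" and "x \<in> carrier X"
    then obtain a d where ad: "a \<in> A" "d \<in> D" "x = a \<oplus>\<^bsub>X\<^esub> d" using dec by blast
    have c: "a \<in> carrier X" "d \<in> carrier X" using ad Ac by auto
    have "smult X r x = smult X r a \<oplus>\<^bsub>X\<^esub> smult X r d" using lmod_distr[OF lmX r c] ad by simp
    then have "dproj X A D (smult X r x) = smult X r a"
      using dproj_eq[OF submod_smult[OF subA r ad(1)] submod_smult[OF subD r ad(2)]] by simp
    then show "dproj X A D (smult X r x) = smult (restr X A) r (dproj X A D x)"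
      using dproj_eq[OF ad(1,2)] ad by simp
  qed
qed

end

lemma prime_lift:
  fixes X :: "('r, 'x) module"
  assumes proj: "proj_sigma TYPE('u) R M" and lmX: "lmodule R X" and sig: "in_sigma TYPE('u) R M X"
    and subA: "submod R X A" and subD: "submod R X D" and AD: "A \<inter> D \<subseteq> {\<zero>\<^bsub>X\<^esub>}"
    and dec: "\<And>x. x \<in> carrier X \<Longrightarrow> \<exists>a\<in>A. \<exists>d\<in>D. x = a \<oplus>\<^bsub>X\<^esub> d"
    and Q: "M_prime R M (restr X A) Q"
  shows "M_prime R M X {x \<in> carrier X. dproj X A D x \<in> Q}"
proof -
  define \<pi> where "\<pi> = dproj X A D"
  define P where "P = {x \<in> carrier X. \<pi> x \<in> Q}"
  have agX: "abelian_group X" using lmod_ag[OF lmX] .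
  interpret X: abelian_group X using agX .
  have AX: "A \<subseteq> carrier X" using submod_sub[OF subA] .
  have lmA: "lmodule R (restr X A)" using submod_lmodule[OF lmX subA] .
  have agA: "abelian_group (restr X A)" using lmod_ag[OF lmA] .
  have \<pi>hom: "hom_mod R X (restr X A) \<pi>" unfolding \<pi>_def by (rule dproj_hom[OF lmX subA subD AD dec])
  have \<pi>X: "hom_mod R X X \<pi>" by (rule hom_from_restr_cod[OF \<pi>hom AX])
  have \<pi>eq: "\<And>a d. a \<in> A \<Longrightarrow> d \<in> D \<Longrightarrow> \<pi> (a \<oplus>\<^bsub>X\<^esub> d) = a"
    unfolding \<pi>_def by (rule dproj_eq[OF lmX subA subD AD dec])
  have Qs: "submod R (restr X A) Q" and QA: "Q \<noteq> A"
    using Q unfolding M_prime_def by auto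
  have Qp: "\<forall>N Z. submod R M N \<longrightarrow> submod R (restr X A) Z \<longrightarrow>
     prod_dot R M N (restr (restr X A) Z) \<subseteq> Q \<longrightarrow> prod_dot R M N (restr X A) \<subseteq> Q \<or> Z \<subseteq> Q"
    using Q by (simp add: M_prime_def)
  have QsubA: "Q \<subseteq> A" using submod_sub[OF Qs] by simp
  have s1: "submod R X P" unfolding P_def by (rule submod_preimage[OF lmX lmA \<pi>hom Qs])
  have s2: "P \<noteq> carrier X"
  proof
    assume PX: "P = carrier X"
    obtain a where a: "a \<in> A" "a \<notin> Q" using QA QsubA by blast
    have "\<pi> a = a" using \<pi>eq[OF a(1) submod_zero[OF subD]] X.r_zero a(1) AX by auto
    moreover have "a \<in> P" using PX a AX by auto
    ultimately show False using a P_def by simp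
  qed
  have s3: "prod_dot R M N X \<subseteq> P \<or> Z \<subseteq> P"
    if N: "submod R M N" and Z: "submod R X Z" and inc: "prod_dot R M N (restr X Z) \<subseteq> P" for N Z
  proof (cases "Z \<subseteq> P")
    case True then show ?thesis by blast
  next
    case False
    have ZX: "Z \<subseteq> carrier X" using submod_sub[OF Z] .
    define Z' where "Z' = \<pi> ` Z"
    have Z'A: "submod R (restr X A) Z'" unfolding Z'_def by (rule submod_image[OF agX agA \<pi>hom Z])
    have Z'X: "submod R X Z'" "Z' \<subseteq> A" using Z'A submod_restr_iff[OF agX subA] by auto
    have nZ': "\<not> Z' \<subseteq> Q"
    proof
      assume "Z' \<subseteq> Q"
      then have "Z \<subseteq> P" unfolding P_def Z'_def using ZX by auto
      then show False using False by simp
    qed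
    have lmZ: "lmodule R (restr X Z)" using submod_lmodule[OF lmX Z] .
    have lmZ': "lmodule R (restr X Z')" using submod_lmodule[OF lmX Z'X(1)] .
    have sigZ: "in_sigma TYPE('u) R M (restr X Z)" by (rule in_sigma_sub[OF lmX sig Z])
    have eZ: "hom_mod R (restr X Z) (restr X Z') \<pi>"
      by (rule hom_restr_cod[OF hom_restr_dom[OF \<pi>X ZX]]) (simp add: Z'_def)
    have surj: "\<pi> ` carrier (restr X Z) = carrier (restr X Z')" by (simp add: Z'_def)
    have NM: "N \<subseteq> carrier M" using submod_sub[OF N] .
    have "prod_dot R M N (restr X Z') \<subseteq> \<pi> ` prod_dot R M N (restr X Z)"
      by (rule proj_lift[OF proj lmZ lmZ' sigZ eZ surj NM])
    also have "\<dots> \<subseteq> \<pi> ` P" using inc by auto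
    also have "\<dots> \<subseteq> Q" unfolding P_def by auto
    finally have "prod_dot R M N (restr (restr X A) Z') \<subseteq> Q" by simp
    then have "prod_dot R M N (restr X A) \<subseteq> Q" using Qp N Z'A nZ' by blast
    moreover have "\<pi> ` prod_dot R M N X \<subseteq> prod_dot R M N (restr X A)" by (rule PD_image[OF \<pi>hom])
    ultimately have "prod_dot R M N X \<subseteq> P"
      unfolding P_def using PD_sub[of R M N X] by blast
    then show ?thesis by blast
  qed
  have "M_prime R M X P" unfolding M_prime_def
    by (intro conjI s1 s2 allI impI, rule s3)
  then show ?thesis unfolding P_def \<pi>_def .
qed

lemma finsum_split:
  assumes "abelian_group X" "finite F" "l \<in> F" "s \<in> F \<rightarrow> carrier X"
  shows "finsum X s F = s l \<oplus>\<^bsub>X\<^esub> finsum X s (F - {l})"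
proof -
  interpret abelian_group X by fact
  have F: "F = insert l (F - {l})" using assms(3) by blast
  have "finsum X s (insert l (F - {l})) = s l \<oplus>\<^bsub>X\<^esub> finsum X s (F - {l})"
    by (rule finsum_insert) (use assms in auto)
  then show ?thesis using F by simp
qed

theorem proposition2p30:
  fixes R :: "('r, 'c) ring_scheme" and M :: "('r, 'm) module"
    and X :: "('r, 'x) module" and L :: "'l set" and Xs :: "'l \<Rightarrow> 'x set"
  assumes "ring R" and "lmodule R M"
    and "proj_sigma TYPE('u) R M"
    and "lmodule R X" and "in_sigma TYPE('u) R M X"
    and "internal_dsum R X L Xs"
  shows "radM R M X = sum_fam X L (\<lambda>l. radM R M (restr X (Xs l)))"
proof -
  note proj = assms(3) and lmX = assms(4) and sig = assms(5)
  interpret X: abelian_group X using lmod_ag[OF lmX] .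
  have XsL: "\<And>l. l \<in> L \<Longrightarrow> submod R X (Xs l)" and carX: "carrier X = sum_fam X L Xs"
    and indep: "\<And>l. l \<in> L \<Longrightarrow> Xs l \<inter> sum_fam X (L - {l}) Xs \<subseteq> {\<zero>\<^bsub>X\<^esub>}"
    using assms(6) unfolding internal_dsum_def by auto
  have Xsc: "\<And>l. l \<in> L \<Longrightarrow> Xs l \<subseteq> carrier X" using submod_sub[OF XsL] by blast
  define D where "D = (\<lambda>l. sum_fam X (L - {l}) Xs)"
  have subD: "\<And>l. submod R X (D l)" unfolding D_def
    by (rule sum_fam_submod[OF lmX]) (use XsL in auto)
  have indepD: "\<And>l. l \<in> L \<Longrightarrow> Xs l \<inter> D l \<subseteq> {\<zero>\<^bsub>X\<^esub>}" unfolding D_def using indep by blast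
  have dec: "\<exists>a\<in>Xs l. \<exists>d\<in>D l. x = a \<oplus>\<^bsub>X\<^esub> d" if l: "l \<in> L" and x: "x \<in> carrier X" for l x
  proof -
    obtain s F where sF: "x = finsum X s F" "finite F" "F \<subseteq> L" "\<forall>k\<in>F. s k \<in> Xs k"
      using x carX unfolding sum_fam_def by blast
    have sc: "s \<in> F \<rightarrow> carrier X" using sF Xsc by blast
    show ?thesis
    proof (cases "l \<in> F")
      case True
      have "x = s l \<oplus>\<^bsub>X\<^esub> finsum X s (F - {l})" using finsum_split[OF X.abelian_group_axioms sF(2) True sc] sF(1) by simp
      moreover have "finsum X s (F - {l}) \<in> D l" unfolding D_def
        by (rule sum_fam_memI) (use sF in auto)
      moreover have "s l \<in> Xs l" using sF True by auto
      ultimately show ?thesis by blast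
    next
      case False
      have "x \<in> D l" unfolding D_def sF(1) by (rule sum_fam_memI) (use sF False in auto)
      moreover have "x = \<zero>\<^bsub>X\<^esub> \<oplus>\<^bsub>X\<^esub> x" using x by simp
      moreover have "\<zero>\<^bsub>X\<^esub> \<in> Xs l" using submod_zero[OF XsL[OF l]] .
      ultimately show ?thesis by blast
    qed
  qed
  show ?thesis
  proof
    show "radM R M X \<subseteq> sum_fam X L (\<lambda>l. radM R M (restr X (Xs l)))"
    proof
      fix x assume x: "x \<in> radM R M X"
      have xc: "x \<in> carrier X" using x rad_sub[of R M X] by blast
      obtain s F where sF: "x = finsum X s F" "finite F" "F \<subseteq> L" "\<forall>k\<in>F. s k \<in> Xs k"
        using xc carX unfolding sum_fam_def by blast
      have sc: "s \<in> F \<rightarrow> carrier X" using sF Xsc by blast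
      have "s l \<in> radM R M (restr X (Xs l))" if l: "l \<in> F" for l
      proof (rule rad_memI)
        have lL: "l \<in> L" using l sF by auto
        show "s l \<in> carrier (restr X (Xs l))" using sF l by simp
        fix Q assume Q: "M_prime R M (restr X (Xs l)) Q"
        have P: "M_prime R M X {y \<in> carrier X. dproj X (Xs l) (D l) y \<in> Q}"
          by (rule prime_lift[OF proj lmX sig XsL[OF lL] subD[of l] indepD[OF lL] dec[OF lL] Q])
        have "x \<in> {y \<in> carrier X. dproj X (Xs l) (D l) y \<in> Q}" by (rule rad_mem[OF x P])
        then have xQ: "dproj X (Xs l) (D l) x \<in> Q" by simp
        have "x = s l \<oplus>\<^bsub>X\<^esub> finsum X s (F - {l})"
          using finsum_split[OF X.abelian_group_axioms sF(2) l sc] sF(1) by simp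
        moreover have "finsum X s (F - {l}) \<in> D l" unfolding D_def
          by (rule sum_fam_memI) (use sF in auto)
        moreover have "s l \<in> Xs l" using sF l by auto
        ultimately have "dproj X (Xs l) (D l) x = s l"
          using dproj_eq[OF lmX XsL[OF lL] subD[of l] indepD[OF lL] dec[OF lL]] by simp
        then show "s l \<in> Q" using xQ by simp
      qed
      then show "x \<in> sum_fam X L (\<lambda>l. radM R M (restr X (Xs l)))"
        unfolding sF(1) by (rule sum_fam_memI[OF sF(2,3)])
    qed
  next
    show "sum_fam X L (\<lambda>l. radM R M (restr X (Xs l))) \<subseteq> radM R M X"
    proof
      fix u assume "u \<in> sum_fam X L (\<lambda>l. radM R M (restr X (Xs l)))"
      then obtain t G where tG: "u = finsum X t G" "finite G" "G \<subseteq> L" "\<forall>k\<in>G. t k \<in> radM R M (restr X (Xs k))"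
        unfolding sum_fam_def by blast
      have "\<And>k. k \<in> G \<Longrightarrow> t k \<in> radM R M X"
        using tG rad_restr_sub[OF lmX XsL] by blast
      then have "finsum X t G \<in> radM R M X"
        by (rule submod_finsum[OF X.abelian_group_axioms rad_submod[OF lmX] tG(2)])
      then show "u \<in> radM R M X" using tG(1) by simp
    qed
  qed
qed

end
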